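(* Let $x_1,x_2,y_1,y_2\in\mathbb{R}^2$ be four points not all on one line, let $\mu=\mu_1\delta_{x_1}+\mu_2\delta_{x_2}$, $\nu=\nu_1\delta_{y_1}+\nu_2\delta_{y_2}$ be probability measures with positive weights and $[\mu]=[\nu]=0$, and assume $\langle x_1,y_1\rangle\ge0$ and $|x_1||y_2|\le|x_2||y_1|$. Assume $\angle(x_2-y_2,y_1-x_1)\neq0$, and let $z_0$ be the intersection point of the line through $x_1,y_1$ and the line through $x_2,y_2$. Define $u$ as below. Then $u\in W^{2,\infty}_{\mathrm{loc}}(\mathbb{R}^2)$, and $u\notin C^2(\mathbb{R}^2)$ unless $\langle x_2-y_2,y_1-x_1\rangle=0$. Moreover, $-\mathrm{Id}\le\nabla^2u(x)\le\mathrm{Id}$ for a.e. $x\in\mathbb{R}^2$ if and only if $\langle x_2-y_2,y_1-x_1\rangle\le0$.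
   Context: $\angle(v,w)\in[0,\pi]$ denotes the angle between vectors $v,w$. Set $\alpha=\frac{\pi}{2\,\angle(x_2-y_2,y_1-x_1)}$ and $\beta=\frac{\alpha}{4\alpha-1}$. Use polar coordinates $x\mapsto(\varrho(x),\vartheta(x))\in[0,\infty)\times[0,2\pi)$ with pole $z_0$ ($\varrho(z_0)=0$), oriented so that $\vartheta(x_1)=0$ and $\vartheta(x_2)\in(0,\pi)$. Let $h:\mathbb{R}\to\mathbb{R}$ be $2\pi$-periodic with $h(\theta)=\cos(2\alpha\theta)$ for $\theta\in[0,\pi/(2\alpha))$ and $h(\theta)=\cos(2\beta(2\pi-\theta))$ for $\theta\in[\pi/(2\alpha),2\pi)$. Define $u(x)=\tfrac12\,h(\vartheta(x))\,\varrho(x)^2$. The inequalities $-\mathrm{Id}\le A\le\mathrm{Id}$ are in the sense of quadratic forms. *)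

theory Defs
  imports "HOL-Analysis.Analysis"
begin

definition vec_angle :: "real^2 \<Rightarrow> real^2 \<Rightarrow> real" where
  "vec_angle v w = (if v = 0 \<or> w = 0 then pi / 2
                    else arccos ((v \<bullet> w) / (norm v * norm w)))"

definition perp2 :: "real^2 \<Rightarrow> real^2" where
  "perp2 v = vector [- (v$2), v$1]"

definition polar_rho :: "real^2 \<Rightarrow> real^2 \<Rightarrow> real" where
  "polar_rho z0 x = norm (x - z0)"

text \<open>Polar angle in [0, 2 pi) with pole z0, oriented so that the angle of x1 is 0
  and the angle of x2 lies in (0, pi).\<close>
definition polar_theta :: "real^2 \<Rightarrow> real^2 \<Rightarrow> real^2 \<Rightarrow> real^2 \<Rightarrow> real" where
  "polar_theta z0 x1 x2 x =
     (let e1 = x1 - z0;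
          s = (if (x2 - z0) \<bullet> perp2 e1 \<ge> 0 then 1 else -1 :: real);
          p = x - z0
      in Arg2pi (Complex (p \<bullet> e1) (s * (p \<bullet> perp2 e1))))"

definition prof_h :: "real \<Rightarrow> real \<Rightarrow> real \<Rightarrow> real" where
  "prof_h \<alpha> \<beta> \<theta> =
     (let t = \<theta> - 2 * pi * of_int \<lfloor>\<theta> / (2 * pi)\<rfloor>
      in if t < pi / (2 * \<alpha>) then cos (2 * \<alpha> * t) else cos (2 * \<beta> * (2 * pi - t)))"

definition alpha_of :: "real^2 \<Rightarrow> real^2 \<Rightarrow> real^2 \<Rightarrow> real^2 \<Rightarrow> real" where
  "alpha_of x1 x2 y1 y2 = pi / (2 * vec_angle (x2 - y2) (y1 - x1))"

definition beta_of :: "real \<Rightarrow> real" where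
  "beta_of \<alpha> = \<alpha> / (4 * \<alpha> - 1)"

definition u_fun :: "real^2 \<Rightarrow> real^2 \<Rightarrow> real^2 \<Rightarrow> real^2 \<Rightarrow> real^2 \<Rightarrow> real^2 \<Rightarrow> real" where
  "u_fun x1 x2 y1 y2 z0 x =
     (let \<alpha> = alpha_of x1 x2 y1 y2; \<beta> = beta_of \<alpha>
      in 1/2 * prof_h \<alpha> \<beta> (polar_theta z0 x1 x2 x) * (polar_rho z0 x)^2)"

definition pd :: "'n::finite \<Rightarrow> (real^'n \<Rightarrow> real) \<Rightarrow> real^'n \<Rightarrow> real" where
  "pd i f = (\<lambda>x. frechet_derivative f (at x) (axis i 1))"

fun Ck :: "nat \<Rightarrow> (real^'n::finite \<Rightarrow> real) \<Rightarrow> bool" where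
  "Ck 0 f = continuous_on UNIV f"
| "Ck (Suc k) f = (continuous_on UNIV f \<and> (\<forall>x. f differentiable (at x)) \<and> (\<forall>i. Ck k (pd i f)))"

definition smooth_fun :: "(real^'n::finite \<Rightarrow> real) \<Rightarrow> bool" where
  "smooth_fun f = (\<forall>k. Ck k f)"

definition test_fun :: "(real^'n::finite \<Rightarrow> real) \<Rightarrow> bool" where
  "test_fun \<phi> = (smooth_fun \<phi> \<and> compact (closure {x. \<phi> x \<noteq> 0}))"

definition loc_integrable :: "(real^'n::finite \<Rightarrow> real) \<Rightarrow> bool" where
  "loc_integrable f = (\<forall>K. compact K \<longrightarrow> set_integrable lebesgue K f)"

definition Linf_loc :: "(real^'n::finite \<Rightarrow> real) \<Rightarrow> bool" where
  "Linf_loc f = (f \<in> borel_measurable lebesgue \<and>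
     (\<forall>K. compact K \<longrightarrow> (\<exists>C. AE x in lebesgue. x \<in> K \<longrightarrow> \<bar>f x\<bar> \<le> C)))"

definition weak_pd1 :: "(real^'n::finite \<Rightarrow> real) \<Rightarrow> 'n \<Rightarrow> (real^'n \<Rightarrow> real) \<Rightarrow> bool" where
  "weak_pd1 u i g = (loc_integrable u \<and> loc_integrable g \<and>
     (\<forall>\<phi>. test_fun \<phi> \<longrightarrow>
        (\<integral>x. u x * pd i \<phi> x \<partial>lebesgue) = - (\<integral>x. g x * \<phi> x \<partial>lebesgue)))"

definition weak_pd2 :: "(real^'n::finite \<Rightarrow> real) \<Rightarrow> 'n \<Rightarrow> 'n \<Rightarrow> (real^'n \<Rightarrow> real) \<Rightarrow> bool" where
  "weak_pd2 u i j g = (loc_integrable u \<and> loc_integrable g \<and>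
     (\<forall>\<phi>. test_fun \<phi> \<longrightarrow>
        (\<integral>x. u x * pd i (pd j \<phi>) x \<partial>lebesgue) = (\<integral>x. g x * \<phi> x \<partial>lebesgue)))"

definition W2inf_loc :: "(real^'n::finite \<Rightarrow> real) \<Rightarrow> bool" where
  "W2inf_loc u = (Linf_loc u \<and>
     (\<forall>i. \<exists>g. Linf_loc g \<and> weak_pd1 u i g) \<and>
     (\<forall>i j. \<exists>g. Linf_loc g \<and> weak_pd2 u i j g))"

definition weak_hessian :: "(real^'n::finite \<Rightarrow> real) \<Rightarrow> (real^'n \<Rightarrow> real^'n^'n) \<Rightarrow> bool" where
  "weak_hessian u H = (\<forall>i j. weak_pd2 u i j (\<lambda>x. H x $ i $ j))"

end

theory Submission
  imports Defs
begin

lemma integrable_bdd_supp: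
  fixes F :: "'a::euclidean_space \<Rightarrow> real"
  assumes Fm: "F \<in> borel_measurable borel"
    and supp: "\<And>x. norm x > R \<Longrightarrow> F x = 0"
    and bnd: "\<And>x. \<bar>F x\<bar> \<le> B"
  shows "integrable lborel F"
proof -
  have I: "integrable lborel (\<lambda>x::'a. B * indicator (cball 0 R) x)"
    using emeasure_bounded_finite[of "cball (0::'a) R"]
    by (intro integrable_mult_right integrable_real_indicator) auto
  have "AE x in lborel. norm (F x) \<le> norm (B * indicator (cball 0 R) x)"
    apply (rule AE_I2)
    using supp bnd by (auto simp: indicator_def mem_cball dist_norm not_le intro: order_trans[OF _ abs_ge_self])
  then show ?thesis
    using Bochner_Integration.integrable_bound[OF I, of F] Fm by simp
qed

lemma ibp_dct:
  fixes F d :: "'a::euclidean_space \<Rightarrow> real" and e :: 'a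
  assumes Fm: "F \<in> borel_measurable borel"
    and dm: "d \<in> borel_measurable borel"
    and supp: "\<And>x. norm x > R \<Longrightarrow> F x = 0"
    and bnd: "\<And>x. \<bar>F x\<bar> \<le> B"
    and lip: "AE x in lborel. \<forall>t. \<bar>t\<bar> \<le> 1 \<longrightarrow> \<bar>F (x + t *\<^sub>R e) - F x\<bar> \<le> L * \<bar>t\<bar>"
    and der: "AE x in lborel. ((\<lambda>t. F (x + t *\<^sub>R e)) has_real_derivative d x) (at 0)"
  shows "integrable lborel d" "integral\<^sup>L lborel d = 0"
proof -
  define t :: "nat \<Rightarrow> real" where "t n = 1 / Suc n" for n
  define s where "s n x = (F (x + t n *\<^sub>R e) - F x) / t n" for n x
  have tpos: "t n > 0" "t n \<le> 1" for n by (auto simp: t_def)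
  have Fsh: "(\<lambda>x. F (x + c)) \<in> borel_measurable borel" for c
    using Fm by measurable
  have sm: "s n \<in> borel_measurable lborel" for n
    unfolding s_def using Fsh[of "t n *\<^sub>R e"] Fm by simp
  have intF: "integrable lborel F" by (rule integrable_bdd_supp[OF Fm supp bnd])
  have trans: "integral\<^sup>L lborel (\<lambda>x. F (x + c)) = integral\<^sup>L lborel F"
    and intsh: "integrable lborel (\<lambda>x. F (x + c))" for c
  proof -
    have eq: "distr lborel borel ((+) c) = lborel" by (rule lborel_distr_plus)
    have "integral\<^sup>L lborel F = integral\<^sup>L (distr lborel borel ((+) c)) F" by (simp add: eq)
    also have "\<dots> = integral\<^sup>L lborel (\<lambda>x. F (c + x))"
      by (rule integral_distr) (auto simp: Fm)
    finally show "integral\<^sup>L lborel (\<lambda>x. F (x + c)) = integral\<^sup>L lborel F" by (simp add: add.commute)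
    have "integrable (distr lborel borel ((+) c)) F" by (simp add: eq intF)
    then have "integrable lborel (\<lambda>x. F (c + x))"
      by (subst integrable_distr_eq[symmetric]) (auto simp: Fm)
    then show "integrable lborel (\<lambda>x. F (x + c))" by (simp add: add.commute)
  qed
  have ints0: "integral\<^sup>L lborel (s n) = 0" for n
  proof -
    have "integral\<^sup>L lborel (s n) = (integral\<^sup>L lborel (\<lambda>x. F (x + t n *\<^sub>R e)) - integral\<^sup>L lborel F) / t n"
      unfolding s_def using intsh intF by simp
    then show ?thesis using trans by simp
  qed
  define w where "w (x::'a) = L * indicator (cball 0 (R + norm e)) x" for x
  have wint: "integrable lborel w"
    unfolding w_def using emeasure_bounded_finite[of "cball (0::'a) (R + norm e)"]
    by (intro integrable_mult_right integrable_real_indicator) auto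
  have lim: "AE x in lborel. (\<lambda>n. s n x) \<longlonglongrightarrow> d x"
    using der
  proof eventually_elim
    case (elim x)
    then have "((\<lambda>h. (F (x + h *\<^sub>R e) - F (x + 0 *\<^sub>R e)) / h) \<longlongrightarrow> d x) (at 0)"
      by (simp add: has_field_derivative_iff)
    moreover have "filterlim t (at 0) sequentially"
    proof (rule filterlim_atI)
      show "t \<longlonglongrightarrow> 0" unfolding t_def using LIMSEQ_Suc[OF lim_inverse_n'] by simp
      show "\<forall>\<^sub>F n in sequentially. t n \<noteq> 0" using tpos by (auto intro!: always_eventually simp: less_imp_neq[symmetric])
    qed
    ultimately have "(\<lambda>n. (F (x + t n *\<^sub>R e) - F (x + 0 *\<^sub>R e)) / t n) \<longlonglongrightarrow> d x"
      by (rule filterlim_compose)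
    then show ?case by (simp add: s_def)
  qed
  have bound: "AE x in lborel. norm (s n x) \<le> w x" for n
    using lip
  proof eventually_elim
    case (elim x)
    show ?case
    proof (cases "norm x \<le> R + norm e")
      case True
      have "\<bar>F (x + t n *\<^sub>R e) - F x\<bar> \<le> L * t n" using elim[rule_format, of "t n"] tpos[of n] by simp
      then show ?thesis using True tpos[of n] by (simp add: s_def w_def abs_divide divide_le_eq)
    next
      case False
      have "norm (x + t n *\<^sub>R e) \<ge> norm x - t n * norm e"
        using norm_triangle_ineq2[of x "- (t n *\<^sub>R e)"] tpos[of n] by simp
      moreover have "t n * norm e \<le> norm e" using tpos[of n] by (simp add: mult_left_le_one_le)
      ultimately have "F (x + t n *\<^sub>R e) = 0" using False norm_ge_zero[of e] by (intro supp) linarith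
      moreover have "F x = 0" using False norm_ge_zero[of e] by (intro supp) linarith
      ultimately show ?thesis using False by (simp add: s_def w_def)
    qed
  qed
  have dm': "d \<in> borel_measurable lborel" using dm by simp
  show "integrable lborel d"
    by (rule integrable_dominated_convergence[OF dm' sm wint lim bound])
  have "(\<lambda>n. integral\<^sup>L lborel (s n)) \<longlonglongrightarrow> integral\<^sup>L lborel d"
    by (rule integral_dominated_convergence[OF dm' sm wint lim bound])
  then show "integral\<^sup>L lborel d = 0" using ints0 by (simp add: LIMSEQ_const_iff)
qed

lemma mvt_fin:
  fixes g g' :: "real \<Rightarrow> real"
  assumes S: "finite S" and ab: "a \<le> b" and gc: "continuous_on {a..b} g"
    and gd: "\<And>t. t \<in> {a<..<b} \<Longrightarrow> t \<notin> S \<Longrightarrow> (g has_real_derivative g' t) (at t)"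
    and gb: "\<And>t. t \<in> {a<..<b} \<Longrightarrow> t \<notin> S \<Longrightarrow> \<bar>g' t\<bar> \<le> M"
    and M0: "M \<ge> 0"
  shows "\<bar>g b - g a\<bar> \<le> M * (b - a)"
proof -
  have S': "finite (S \<union> {a,b})" using S by simp
  have "(g' has_integral (g b - g a)) {a..b}"
    apply (rule fundamental_theorem_of_calculus_interior_strong[OF S ab])
    using gd has_real_derivative_iff_has_vector_derivative apply blast
    using gc by blast
  then have "norm (g b - g a) \<le> M * Henstock_Kurzweil_Integration.content {a..b}"
    by (rule has_integral_bound_real[OF M0 S']) (use gb in auto)
  then show ?thesis using ab by simp
qed

lemma cont_bdd:
  fixes f :: "'a::euclidean_space \<Rightarrow> real"
  assumes "continuous_on UNIV f"
  obtains B where "B \<ge> 0" "\<And>x. norm x \<le> r \<Longrightarrow> \<bar>f x\<bar> \<le> B"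
proof -
  have "continuous_on (cball 0 r) f" using assms continuous_on_subset by blast
  then obtain B where "B \<ge> 0" "\<And>x. x \<in> cball 0 r \<Longrightarrow> norm (f x) \<le> B"
    using continuous_on_compact_bound[of "cball 0 r" f] by auto
  then show ?thesis using that by (auto simp: mem_cball dist_norm)
qed

lemma mvt_line:
  fixes g g' :: "real \<Rightarrow> real"
  assumes S: "finite S" and gc: "continuous_on UNIV g"
    and gd: "\<And>t. \<bar>t\<bar> < 1 \<Longrightarrow> t \<notin> S \<Longrightarrow> (g has_real_derivative g' t) (at t)"
    and gb: "\<And>t. \<bar>t\<bar> < 1 \<Longrightarrow> t \<notin> S \<Longrightarrow> \<bar>g' t\<bar> \<le> M"
    and M0: "M \<ge> 0" and t: "\<bar>t\<bar> \<le> 1"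
  shows "\<bar>g t - g 0\<bar> \<le> M * \<bar>t\<bar>"
proof (cases "t \<ge> 0")
  case True
  have "\<bar>g t - g 0\<bar> \<le> M * (t - 0)"
    by (rule mvt_fin[OF S True, where g'=g' and M=M]) (use gc continuous_on_subset in blast, (use gd gb t M0 in auto))
  then show ?thesis using True by simp
next
  case False
  have "\<bar>g 0 - g t\<bar> \<le> M * (0 - t)"
    by (rule mvt_fin[OF S, where g'=g' and M=M]) (use False gc continuous_on_subset in auto, (use gd gb t M0 in auto))
  then show ?thesis using False by (simp add: abs_minus_commute)
qed

lemma weak_ibp:
  fixes f df \<phi> d\<phi> :: "'a::euclidean_space \<Rightarrow> real" and e :: 'a
  assumes fc: "continuous_on UNIV f"
    and dfm: "df \<in> borel_measurable borel"
    and dfb: "\<And>r. \<exists>M. \<forall>x. norm x \<le> r \<longrightarrow> \<bar>df x\<bar> \<le> M"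
    and N: "N \<in> null_sets lebesgue"
    and fd: "\<And>x. x \<notin> N \<Longrightarrow> \<exists>S. finite S \<and> 0 \<notin> S \<and>
              (\<forall>t. t \<notin> S \<longrightarrow> ((\<lambda>s. f (x + s *\<^sub>R e)) has_real_derivative df (x + t *\<^sub>R e)) (at t))"
    and \<phi>c: "continuous_on UNIV \<phi>" and d\<phi>c: "continuous_on UNIV d\<phi>"
    and \<phi>d: "\<And>x. ((\<lambda>s. \<phi> (x + s *\<^sub>R e)) has_real_derivative d\<phi> x) (at 0)"
    and \<phi>s: "\<And>x. norm x > R \<Longrightarrow> \<phi> x = 0"
  shows "integrable lebesgue (\<lambda>x. df x * \<phi> x)" "integrable lebesgue (\<lambda>x. f x * d\<phi> x)"
     "(\<integral>x. f x * d\<phi> x \<partial>lebesgue) = - (\<integral>x. df x * \<phi> x \<partial>lebesgue)"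
proof -
  have fm: "f \<in> borel_measurable borel" using fc by (rule borel_measurable_continuous_onI)
  have \<phi>m: "\<phi> \<in> borel_measurable borel" using \<phi>c by (rule borel_measurable_continuous_onI)
  have d\<phi>m: "d\<phi> \<in> borel_measurable borel" using d\<phi>c by (rule borel_measurable_continuous_onI)
  have \<phi>d': "((\<lambda>s. \<phi> (x + s *\<^sub>R e)) has_real_derivative d\<phi> (x + t *\<^sub>R e)) (at t)" for x t
  proof -
    have "((\<lambda>s. \<phi> ((x + t *\<^sub>R e) + s *\<^sub>R e)) has_real_derivative d\<phi> (x + t *\<^sub>R e)) (at 0)"
      by (rule \<phi>d)
    then have "((\<lambda>s. \<phi> (x + s *\<^sub>R e)) has_real_derivative d\<phi> (x + t *\<^sub>R e)) (at (0 + t))"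
      by (subst DERIV_shift) (simp add: algebra_simps scaleR_add_left)
    then show ?thesis by simp
  qed
  have d\<phi>s: "d\<phi> x = 0" if "norm x > R" for x
  proof -
    have ev: "\<forall>\<^sub>F s in nhds 0. \<phi> (x + s *\<^sub>R e) = 0"
    proof -
      have "continuous_on UNIV (\<lambda>s::real. norm (x + s *\<^sub>R e))" by (intro continuous_intros)
      then have "isCont (\<lambda>s::real. norm (x + s *\<^sub>R e)) 0" by (simp add: continuous_on_eq_continuous_at)
      then have "((\<lambda>s::real. norm (x + s *\<^sub>R e)) \<longlongrightarrow> norm (x + 0 *\<^sub>R e)) (nhds 0)"
        unfolding isCont_def by (rule tendsto_at_iff_tendsto_nhds[THEN iffD1])
      then have "((\<lambda>s::real. norm (x + s *\<^sub>R e)) \<longlongrightarrow> norm x) (nhds 0)" by simp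
      then have "\<forall>\<^sub>F s in nhds 0. norm (x + s *\<^sub>R e) > R"
        using that by (rule order_tendstoD)
      then show ?thesis by eventually_elim (use \<phi>s in auto)
    qed
    have "((\<lambda>s. \<phi> (x + s *\<^sub>R e)) has_real_derivative 0) (at 0)"
      using DERIV_cong_ev[OF refl ev refl] DERIV_const by blast
    then show ?thesis using \<phi>d[of x] DERIV_unique by blast
  qed
  define F where "F x = f x * \<phi> x" for x
  define d where "d x = df x * \<phi> x + f x * d\<phi> x" for x
  have Fm: "F \<in> borel_measurable borel" unfolding F_def using fm \<phi>m by measurable
  have dm: "d \<in> borel_measurable borel" unfolding d_def using fm \<phi>m dfm d\<phi>m by measurable
  have Fs: "F x = 0" if "norm x > R" for x using \<phi>s[OF that] by (simp add: F_def)
  obtain BF where BF: "\<And>x. norm x \<le> R \<Longrightarrow> \<bar>F x\<bar> \<le> BF" "BF \<ge> 0"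
    using cont_bdd[of F R] fc \<phi>c unfolding F_def by (metis continuous_on_mult)
  have Fb: "\<bar>F x\<bar> \<le> BF" for x using BF Fs[of x] by (cases "norm x \<le> R") auto
  define \<rho> where "\<rho> = R + 2 * norm e"
  obtain Bf where Bf: "\<And>x. norm x \<le> \<rho> \<Longrightarrow> \<bar>f x\<bar> \<le> Bf" "Bf \<ge> 0" using cont_bdd[OF fc] by metis
  obtain B\<phi> where B\<phi>: "\<And>x. norm x \<le> \<rho> \<Longrightarrow> \<bar>\<phi> x\<bar> \<le> B\<phi>" "B\<phi> \<ge> 0" using cont_bdd[OF \<phi>c] by metis
  obtain Md\<phi> where Md\<phi>: "\<And>x. norm x \<le> \<rho> \<Longrightarrow> \<bar>d\<phi> x\<bar> \<le> Md\<phi>" "Md\<phi> \<ge> 0" using cont_bdd[OF d\<phi>c] by metis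
  obtain Mdf0 where Mdf0: "\<And>x. norm x \<le> \<rho> \<Longrightarrow> \<bar>df x\<bar> \<le> Mdf0" using dfb by metis
  define Mdf where "Mdf = max Mdf0 0"
  have Mdf: "\<And>x. norm x \<le> \<rho> \<Longrightarrow> \<bar>df x\<bar> \<le> Mdf" "Mdf \<ge> 0" using Mdf0 by (force simp: Mdf_def)+
  have NN: "N \<in> null_sets lborel \<or> True" by simp
  have AEN: "AE x in lborel. x \<notin> N"
  proof -
    have "AE x in lebesgue. x \<notin> N" using N by (rule AE_not_in)
    then show ?thesis by (simp add: AE_completion_iff)
  qed
  have lip: "AE x in lborel. \<forall>t. \<bar>t\<bar> \<le> 1 \<longrightarrow> \<bar>F (x + t *\<^sub>R e) - F x\<bar> \<le> (Bf * Md\<phi> + Mdf * B\<phi>) * \<bar>t\<bar>"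
    using AEN
  proof eventually_elim
    case (elim x)
    show ?case
    proof (intro allI impI)
      fix t :: real assume t: "\<bar>t\<bar> \<le> 1"
      show "\<bar>F (x + t *\<^sub>R e) - F x\<bar> \<le> (Bf * Md\<phi> + Mdf * B\<phi>) * \<bar>t\<bar>"
      proof (cases "norm x \<le> R + norm e")
        case False
        have "norm (x + t *\<^sub>R e) \<ge> norm x - \<bar>t\<bar> * norm e"
          using norm_triangle_ineq2[of x "- (t *\<^sub>R e)"] by simp
        moreover have "\<bar>t\<bar> * norm e \<le> norm e" using t by (simp add: mult_left_le_one_le)
        ultimately have "F (x + t *\<^sub>R e) = 0" using False norm_ge_zero[of e] by (intro Fs) linarith
        moreover have "F x = 0" using False norm_ge_zero[of e] by (intro Fs) linarith
        ultimately show ?thesis using Bf B\<phi> Md\<phi> Mdf by simp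
      next
        case True
        have inb: "norm (x + s *\<^sub>R e) \<le> \<rho>" if "\<bar>s\<bar> \<le> 1" for s
        proof -
          have "norm (x + s *\<^sub>R e) \<le> norm x + \<bar>s\<bar> * norm e" using norm_triangle_ineq[of x "s *\<^sub>R e"] by simp
          moreover have "\<bar>s\<bar> * norm e \<le> norm e" using that by (simp add: mult_left_le_one_le)
          ultimately show ?thesis using True unfolding \<rho>_def by linarith
        qed
        obtain S where S: "finite S" "0 \<notin> S"
          "\<And>t. t \<notin> S \<Longrightarrow> ((\<lambda>s. f (x + s *\<^sub>R e)) has_real_derivative df (x + t *\<^sub>R e)) (at t)"
          using fd[OF elim] by blast
        have cl: "continuous_on UNIV (\<lambda>s::real. x + s *\<^sub>R e)" by (intro continuous_intros)
        have fl: "continuous_on UNIV (\<lambda>s. f (x + s *\<^sub>R e))"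
          using continuous_on_compose[OF cl, of f] fc continuous_on_subset by (auto simp: o_def)
        have \<phi>l: "continuous_on UNIV (\<lambda>s. \<phi> (x + s *\<^sub>R e))"
          using continuous_on_compose[OF cl, of \<phi>] \<phi>c continuous_on_subset by (auto simp: o_def)
        have f1: "\<bar>f (x + t *\<^sub>R e) - f (x + 0 *\<^sub>R e)\<bar> \<le> Mdf * \<bar>t\<bar>"
          by (rule mvt_line[OF S(1) fl, of "\<lambda>s. df (x + s *\<^sub>R e)"]) (use S(3) Mdf inb t in auto)
        have p1: "\<bar>\<phi> (x + t *\<^sub>R e) - \<phi> (x + 0 *\<^sub>R e)\<bar> \<le> Md\<phi> * \<bar>t\<bar>"
          by (rule mvt_line[OF _ \<phi>l, of "{}" "\<lambda>s. d\<phi> (x + s *\<^sub>R e)"]) (use \<phi>d' Md\<phi> inb t in auto)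
        have "F (x + t *\<^sub>R e) - F x = f (x + t *\<^sub>R e) * (\<phi> (x + t *\<^sub>R e) - \<phi> x) + (f (x + t *\<^sub>R e) - f x) * \<phi> x"
          by (simp add: F_def algebra_simps)
        also have "\<bar>\<dots>\<bar> \<le> \<bar>f (x + t *\<^sub>R e)\<bar> * \<bar>\<phi> (x + t *\<^sub>R e) - \<phi> x\<bar> + \<bar>f (x + t *\<^sub>R e) - f x\<bar> * \<bar>\<phi> x\<bar>"
          by (simp add: abs_mult[symmetric] abs_triangle_ineq)
        also have "\<dots> \<le> Bf * (Md\<phi> * \<bar>t\<bar>) + (Mdf * \<bar>t\<bar>) * B\<phi>"
        proof (intro add_mono mult_mono)
          show "\<bar>f (x + t *\<^sub>R e)\<bar> \<le> Bf" using Bf inb t by blast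
          show "\<bar>\<phi> (x + t *\<^sub>R e) - \<phi> x\<bar> \<le> Md\<phi> * \<bar>t\<bar>" using p1 by simp
          show "\<bar>f (x + t *\<^sub>R e) - f x\<bar> \<le> Mdf * \<bar>t\<bar>" using f1 by simp
          show "\<bar>\<phi> x\<bar> \<le> B\<phi>" using B\<phi> inb[of 0] by simp
        qed (use Bf Mdf in auto)
        finally show ?thesis by (simp add: algebra_simps)
      qed
    qed
  qed
  have der: "AE x in lborel. ((\<lambda>t. F (x + t *\<^sub>R e)) has_real_derivative d x) (at 0)"
    using AEN
  proof eventually_elim
    case (elim x)
    obtain S where S: "finite S" "0 \<notin> S"
      "\<And>t. t \<notin> S \<Longrightarrow> ((\<lambda>s. f (x + s *\<^sub>R e)) has_real_derivative df (x + t *\<^sub>R e)) (at t)"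
      using fd[OF elim] by blast
    have "((\<lambda>s. f (x + s *\<^sub>R e) * \<phi> (x + s *\<^sub>R e)) has_real_derivative
        df (x + 0 *\<^sub>R e) * \<phi> (x + 0 *\<^sub>R e) + d\<phi> x * f (x + 0 *\<^sub>R e)) (at 0)"
      by (rule DERIV_mult[OF S(3)[OF S(2)] \<phi>d])
    then show ?case by (simp add: F_def d_def algebra_simps)
  qed
  have I: "integrable lborel d" "integral\<^sup>L lborel d = 0"
    using ibp_dct[OF Fm dm Fs Fb lip der] by auto
  have fdphi_s: "f x * d\<phi> x = 0" if "norm x > R" for x using d\<phi>s[OF that] by simp
  obtain B2 where B2: "\<And>x. norm x \<le> R \<Longrightarrow> \<bar>f x * d\<phi> x\<bar> \<le> B2" "B2 \<ge> 0"
    using cont_bdd[of "\<lambda>x. f x * d\<phi> x" R] fc d\<phi>c by (metis continuous_on_mult)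
  have I2: "integrable lborel (\<lambda>x. f x * d\<phi> x)"
    apply (rule integrable_bdd_supp[of _ R B2])
    using fm d\<phi>m apply measurable
    using fdphi_s apply blast
    subgoal for x using B2 fdphi_s[of x] by (cases "norm x \<le> R") auto
    done
  have I3: "integrable lborel (\<lambda>x. df x * \<phi> x)"
  proof -
    have "integrable lborel (\<lambda>x. d x - f x * d\<phi> x)" using I(1) I2 by simp
    then show ?thesis by (simp add: d_def)
  qed
  have m2: "(\<lambda>x. f x * d\<phi> x) \<in> borel_measurable lborel" using fm d\<phi>m by measurable
  have m3: "(\<lambda>x. df x * \<phi> x) \<in> borel_measurable lborel" using dfm \<phi>m by measurable
  show "integrable lebesgue (\<lambda>x. df x * \<phi> x)" using I3 m3 by (simp add: integrable_completion)
  show "integrable lebesgue (\<lambda>x. f x * d\<phi> x)" using I2 m2 by (simp add: integrable_completion)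
  have "integral\<^sup>L lborel d = integral\<^sup>L lborel (\<lambda>x. df x * \<phi> x) + integral\<^sup>L lborel (\<lambda>x. f x * d\<phi> x)"
    unfolding d_def using I2 I3 by simp
  then show "(\<integral>x. f x * d\<phi> x \<partial>lebesgue) = - (\<integral>x. df x * \<phi> x \<partial>lebesgue)"
    using I(2) m2 m3 by (simp add: integral_completion)
qed


lemma line_deriv:
  fixes f :: "real^'n \<Rightarrow> real"
  assumes "(f has_derivative f') (at y)" "y = x"
  shows "((\<lambda>s. f (x + s *\<^sub>R e)) has_real_derivative f' e) (at 0)"
proof -
  have l: "((\<lambda>s::real. x + s *\<^sub>R e) has_derivative (\<lambda>s. s *\<^sub>R e)) (at 0)"
    by (auto intro!: derivative_eq_intros)
  have f: "(f has_derivative f') (at ((\<lambda>s::real. x + s *\<^sub>R e) 0))" using assms by simp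
  have "((\<lambda>s. f (x + s *\<^sub>R e)) has_derivative (\<lambda>s. f' (s *\<^sub>R e))) (at 0)"
    using has_derivative_compose[OF l f] by simp
  moreover have "linear f'" using assms(1) has_derivative_linear by blast
  then have "(\<lambda>s. f' (s *\<^sub>R e)) = (*) (f' e)" by (auto simp: linear_cmul mult.commute)
  ultimately show ?thesis by (simp add: has_field_derivative_def)
qed

lemma line_deriv_pd:
  fixes f :: "real^'n \<Rightarrow> real"
  assumes "f differentiable (at x)"
  shows "((\<lambda>s. f (x + s *\<^sub>R axis i 1)) has_real_derivative pd i f x) (at 0)"
  unfolding pd_def using line_deriv[OF frechet_derivative_works[THEN iffD1, OF assms] refl] .

lemma smooth_Suc: "smooth_fun f \<Longrightarrow> continuous_on UNIV f \<and> (\<forall>x. f differentiable (at x)) \<and> (\<forall>i. smooth_fun (pd i f))"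
  unfolding smooth_fun_def
proof (intro conjI allI)
  assume a: "\<forall>k. Ck k f"
  show "continuous_on UNIV f" using a[rule_format, of 0] by simp
  show "f differentiable (at x)" for x using a[rule_format, of 1] by simp
  show "Ck k (pd i f)" for i k using a[rule_format, of "Suc k"] by simp
qed

lemma pd_zero_outside:
  fixes f :: "real^'n \<Rightarrow> real"
  assumes "x \<notin> closure {y. f y \<noteq> 0}"
  shows "pd i f x = 0"
proof -
  let ?U = "- closure {y. f y \<noteq> 0}"
  have "open ?U" by auto
  have "((\<lambda>y. 0) has_derivative (\<lambda>v. 0)) (at x)" by simp
  then have "(f has_derivative (\<lambda>v. 0)) (at x)"
    apply (rule has_derivative_transform_within_open[OF _ \<open>open ?U\<close>])
    using assms closure_subset[of "{y. f y \<noteq> 0}"] by auto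
  then show ?thesis unfolding pd_def using frechet_derivative_at by metis
qed

lemma test_fun_pd:
  fixes \<phi> :: "real^'n \<Rightarrow> real"
  assumes "test_fun \<phi>"
  shows "test_fun (pd i \<phi>)"
proof -
  have s: "smooth_fun (pd i \<phi>)" using assms smooth_Suc unfolding test_fun_def by blast
  have "{y. pd i \<phi> y \<noteq> 0} \<subseteq> closure {y. \<phi> y \<noteq> 0}" using pd_zero_outside by blast
  then have "closure {y. pd i \<phi> y \<noteq> 0} \<subseteq> closure {y. \<phi> y \<noteq> 0}"
    by (simp add: closure_minimal)
  moreover have "compact (closure {y. \<phi> y \<noteq> 0})" using assms unfolding test_fun_def by blast
  ultimately have "bounded (closure {y. pd i \<phi> y \<noteq> 0})"
    using bounded_subset compact_imp_bounded by blast
  then have "compact (closure {y. pd i \<phi> y \<noteq> 0})"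
    using compact_eq_bounded_closed by blast
  then show ?thesis using s unfolding test_fun_def by blast
qed

lemma test_fun_basic:
  fixes \<phi> :: "real^'n \<Rightarrow> real"
  assumes "test_fun \<phi>"
  shows "continuous_on UNIV \<phi>" "\<And>x. \<phi> differentiable (at x)"
    "\<exists>R. \<forall>x. norm x > R \<longrightarrow> \<phi> x = 0"
proof -
  have s: "smooth_fun \<phi>" and c: "compact (closure {y. \<phi> y \<noteq> 0})" using assms unfolding test_fun_def by auto
  show "continuous_on UNIV \<phi>" "\<And>x. \<phi> differentiable (at x)" using smooth_Suc[OF s] by auto
  obtain R where "\<forall>y\<in>closure {y. \<phi> y \<noteq> 0}. norm y \<le> R"
    using compact_imp_bounded[OF c] bounded_iff by blast
  then have "\<forall>x. norm x > R \<longrightarrow> \<phi> x = 0" using closure_subset[of "{y. \<phi> y \<noteq> 0}"] by force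
  then show "\<exists>R. \<forall>x. norm x > R \<longrightarrow> \<phi> x = 0" by blast
qed

lemma test_fun_pd_cont:
  fixes \<phi> :: "real^'n \<Rightarrow> real"
  assumes "test_fun \<phi>"
  shows "continuous_on UNIV (pd i \<phi>)"
  using test_fun_basic(1)[OF test_fun_pd[OF assms]] .

lemma line_deriv_t:
  fixes f :: "real^'n \<Rightarrow> real"
  assumes "(f has_derivative f') (at (x + t *\<^sub>R e))"
  shows "((\<lambda>s. f (x + s *\<^sub>R e)) has_real_derivative f' e) (at t)"
proof -
  have "((\<lambda>s. f ((x + t *\<^sub>R e) + s *\<^sub>R e)) has_real_derivative f' e) (at 0)"
    by (rule line_deriv[OF assms refl])
  then have "((\<lambda>s. f (x + s *\<^sub>R e)) has_real_derivative f' e) (at (0 + t))"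
    by (subst DERIV_shift) (simp add: algebra_simps scaleR_add_left)
  then show ?thesis by simp
qed

lemma bdd_loc_integrable:
  fixes f :: "real^'n \<Rightarrow> real"
  assumes fm: "f \<in> borel_measurable borel"
    and fb: "\<And>r. \<exists>M. \<forall>x. norm x \<le> r \<longrightarrow> \<bar>f x\<bar> \<le> M"
  shows "loc_integrable f"
  unfolding loc_integrable_def
proof (intro allI impI)
  fix K :: "(real^'n) set" assume K: "compact K"
  obtain r where r: "\<And>x. x \<in> K \<Longrightarrow> norm x \<le> r" using compact_imp_bounded[OF K] bounded_iff by blast
  obtain M where M: "\<And>x. norm x \<le> r \<Longrightarrow> \<bar>f x\<bar> \<le> M" using fb by blast
  have Kb: "K \<in> sets borel" using K by (simp add: compact_imp_closed borel_closed)
  have m: "(\<lambda>x. indicator K x *\<^sub>R f x) \<in> borel_measurable borel" using fm Kb by measurable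
  have "integrable lborel (\<lambda>x. indicator K x *\<^sub>R f x)"
    apply (rule integrable_bdd_supp[OF m, of r "max M 0"])
    subgoal for x using r[of x] by (auto simp: indicator_def)
    subgoal for x using r[of x] M[of x] by (auto simp: indicator_def)
    done
  then show "set_integrable lebesgue K f" unfolding set_integrable_def
    using m by (simp add: integrable_completion)
qed

lemma bdd_Linf_loc:
  fixes f :: "real^'n \<Rightarrow> real"
  assumes fm: "f \<in> borel_measurable borel"
    and fb: "\<And>r. \<exists>M. \<forall>x. norm x \<le> r \<longrightarrow> \<bar>f x\<bar> \<le> M"
  shows "Linf_loc f"
  unfolding Linf_loc_def
proof (intro conjI allI impI)
  show "f \<in> borel_measurable lebesgue" using fm by (simp add: measurable_completion)
  fix K :: "(real^'n) set" assume K: "compact K"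
  obtain r where r: "\<And>x. x \<in> K \<Longrightarrow> norm x \<le> r" using compact_imp_bounded[OF K] bounded_iff by blast
  obtain M where M: "\<And>x. norm x \<le> r \<Longrightarrow> \<bar>f x\<bar> \<le> M" using fb by blast
  show "\<exists>C. AE x in lebesgue. x \<in> K \<longrightarrow> \<bar>f x\<bar> \<le> C"
    using r M by (intro exI[of _ M] AE_I2) auto
qed

lemma cont_bdd_ex:
  fixes f :: "real^'n \<Rightarrow> real"
  assumes "continuous_on UNIV f"
  shows "\<exists>M. \<forall>x. norm x \<le> r \<longrightarrow> \<bar>f x\<bar> \<le> M"
  using cont_bdd[OF assms, of r] by metis

lemma abstract_weak:
  fixes u :: "real^'n \<Rightarrow> real" and Gu :: "real^'n \<Rightarrow> real^'n" and Hm :: "real^'n \<Rightarrow> real^'n^'n"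
  assumes ud: "\<And>x. (u has_derivative (\<lambda>v. Gu x \<bullet> v)) (at x)"
    and Gc: "continuous_on UNIV Gu"
    and Hd: "\<And>x. x \<notin> N \<Longrightarrow> (Gu has_derivative (\<lambda>v. Hm x *v v)) (at x)"
    and Hmeas: "\<And>i j. (\<lambda>x. Hm x $ i $ j) \<in> borel_measurable borel"
    and Hb: "\<And>x i j. \<bar>Hm x $ i $ j\<bar> \<le> C"
    and Nnull: "N \<in> null_sets lebesgue"
    and Nline: "\<And>x j. x \<notin> N \<Longrightarrow> finite {t. x + t *\<^sub>R axis j 1 \<in> N}"
  shows "\<And>i. pd i u = (\<lambda>x. Gu x $ i)"
    and "\<And>i. weak_pd1 u i (\<lambda>x. Gu x $ i)"
    and "\<And>i j \<phi>. test_fun \<phi> \<Longrightarrow> (\<integral>x. u x * pd i (pd j \<phi>) x \<partial>lebesgue) = (\<integral>x. Hm x $ i $ j * \<phi> x \<partial>lebesgue)"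
    and "W2inf_loc u" "weak_hessian u Hm"
proof -
  have uc: "continuous_on UNIV u"
    using ud has_derivative_continuous continuous_at_imp_continuous_on by blast
  have um: "u \<in> borel_measurable borel" using uc by (rule borel_measurable_continuous_onI)
  have Gic: "continuous_on UNIV (\<lambda>x. Gu x $ i)" for i
    using Gc by (intro continuous_intros)
  have Gim: "(\<lambda>x. Gu x $ i) \<in> borel_measurable borel" for i using Gic by (rule borel_measurable_continuous_onI)
  show pdu: "pd i u = (\<lambda>x. Gu x $ i)" for i
  proof
    fix x
    have "(\<lambda>v. Gu x \<bullet> v) = frechet_derivative u (at x)" using ud frechet_derivative_at by blast
    then show "pd i u x = Gu x $ i" unfolding pd_def by (metis inner_axis real_inner_1_right)
  qed
  have uli: "loc_integrable u" by (rule bdd_loc_integrable[OF um cont_bdd_ex[OF uc]])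
  have Gli: "loc_integrable (\<lambda>x. Gu x $ i)" for i by (rule bdd_loc_integrable[OF Gim cont_bdd_ex[OF Gic]])
  have Hli: "loc_integrable (\<lambda>x. Hm x $ i $ j)" for i j using Hb by (intro bdd_loc_integrable[OF Hmeas]) blast
  have step1: "(\<integral>x. u x * pd i \<psi> x \<partial>lebesgue) = - (\<integral>x. Gu x $ i * \<psi> x \<partial>lebesgue)"
    if tpsi: "test_fun \<psi>" for i \<psi>
  proof -
    obtain R where R: "\<And>x. norm x > R \<Longrightarrow> \<psi> x = 0" using test_fun_basic(3)[OF tpsi] by blast
    show ?thesis
    proof (rule weak_ibp(3)[of u "\<lambda>x. Gu x $ i" "{}" "axis i 1" \<psi> "pd i \<psi>" R])
      show "continuous_on UNIV u" by (rule uc)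
      show "(\<lambda>x. Gu x $ i) \<in> borel_measurable borel" by (rule Gim)
      show "\<exists>M. \<forall>x. norm x \<le> r \<longrightarrow> \<bar>Gu x $ i\<bar> \<le> M" for r by (rule cont_bdd_ex[OF Gic])
      show "{} \<in> null_sets lebesgue" by simp
      show "\<exists>S. finite S \<and> 0 \<notin> S \<and> (\<forall>t. t \<notin> S \<longrightarrow> ((\<lambda>s. u (x + s *\<^sub>R axis i 1)) has_real_derivative Gu (x + t *\<^sub>R axis i 1) $ i) (at t))" for x
        by (intro exI[of _ "{}"]) (auto intro!: line_deriv_t[OF ud, THEN DERIV_cong] simp: inner_axis)
      show "continuous_on UNIV \<psi>" using test_fun_basic(1)[OF tpsi] .
      show "continuous_on UNIV (pd i \<psi>)" using test_fun_pd_cont[OF tpsi] .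
      show "((\<lambda>s. \<psi> (x + s *\<^sub>R axis i 1)) has_real_derivative pd i \<psi> x) (at 0)" for x
        using line_deriv_pd test_fun_basic(2)[OF tpsi] by blast
      show "norm x > R \<Longrightarrow> \<psi> x = 0" for x using R by blast
    qed
  qed
  have step2: "(\<integral>x. Gu x $ i * pd j \<phi> x \<partial>lebesgue) = - (\<integral>x. Hm x $ i $ j * \<phi> x \<partial>lebesgue)"
    if tphi: "test_fun \<phi>" for i j \<phi>
  proof -
    obtain R where R: "\<And>x. norm x > R \<Longrightarrow> \<phi> x = 0" using test_fun_basic(3)[OF tphi] by blast
    show ?thesis
    proof (rule weak_ibp(3)[of "\<lambda>x. Gu x $ i" "\<lambda>x. Hm x $ i $ j" N "axis j 1" \<phi> "pd j \<phi>" R])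
      show "continuous_on UNIV (\<lambda>x. Gu x $ i)" by (rule Gic)
      show "(\<lambda>x. Hm x $ i $ j) \<in> borel_measurable borel" by (rule Hmeas)
      show "\<exists>M. \<forall>x. norm x \<le> r \<longrightarrow> \<bar>Hm x $ i $ j\<bar> \<le> M" for r using Hb by blast
      show "N \<in> null_sets lebesgue" by (rule Nnull)
      show "\<exists>S. finite S \<and> 0 \<notin> S \<and> (\<forall>t. t \<notin> S \<longrightarrow> ((\<lambda>s. Gu (x + s *\<^sub>R axis j 1) $ i) has_real_derivative Hm (x + t *\<^sub>R axis j 1) $ i $ j) (at t))"
        if xN: "x \<notin> N" for x
      proof (intro exI[of _ "{t. x + t *\<^sub>R axis j 1 \<in> N}"] conjI allI impI)
        show "finite {t. x + t *\<^sub>R axis j 1 \<in> N}" using Nline[OF xN] .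
        show "0 \<notin> {t. x + t *\<^sub>R axis j 1 \<in> N}" using xN by simp
        fix t assume "t \<notin> {t. x + t *\<^sub>R axis j 1 \<in> N}"
        then have "x + t *\<^sub>R axis j 1 \<notin> N" by simp
        from Hd[OF this] have "((\<lambda>y. Gu y $ i) has_derivative (\<lambda>v. (Hm (x + t *\<^sub>R axis j 1) *v v) $ i)) (at (x + t *\<^sub>R axis j 1))"
          by (rule bounded_linear.has_derivative[OF bounded_linear_vec_nth])
        from line_deriv_t[OF this] show "((\<lambda>s. Gu (x + s *\<^sub>R axis j 1) $ i) has_real_derivative Hm (x + t *\<^sub>R axis j 1) $ i $ j) (at t)"
          by (simp add: matrix_vector_mul_component inner_axis)
      qed
      show "continuous_on UNIV \<phi>" using test_fun_basic(1)[OF tphi] .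
      show "continuous_on UNIV (pd j \<phi>)" using test_fun_pd_cont[OF tphi] .
      show "((\<lambda>s. \<phi> (x + s *\<^sub>R axis j 1)) has_real_derivative pd j \<phi> x) (at 0)" for x
        using line_deriv_pd test_fun_basic(2)[OF tphi] by blast
      show "norm x > R \<Longrightarrow> \<phi> x = 0" for x using R by blast
    qed
  qed
  show wpd1: "weak_pd1 u i (\<lambda>x. Gu x $ i)" for i
    unfolding weak_pd1_def using uli Gli step1 by blast
  show hess: "(\<integral>x. u x * pd i (pd j \<phi>) x \<partial>lebesgue) = (\<integral>x. Hm x $ i $ j * \<phi> x \<partial>lebesgue)"
    if "test_fun \<phi>" for i j \<phi>
    using step1[OF test_fun_pd[OF that, of j], of i] step2[OF that, of i j] by simp
  show "weak_hessian u Hm" unfolding weak_hessian_def weak_pd2_def using uli Hli hess by blast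
  show "W2inf_loc u" unfolding W2inf_loc_def
  proof (intro conjI allI)
    show "Linf_loc u" by (rule bdd_Linf_loc[OF um cont_bdd_ex[OF uc]])
    show "\<exists>g. Linf_loc g \<and> weak_pd1 u i g" for i
      using wpd1 bdd_Linf_loc[OF Gim cont_bdd_ex[OF Gic]] by blast
    show "\<exists>g. Linf_loc g \<and> weak_pd2 u i j g" for i j
      using bdd_Linf_loc[OF Hmeas, of i j] Hb hess uli Hli unfolding weak_pd2_def by blast
  qed
qed


definition psi :: "real poly \<Rightarrow> real \<Rightarrow> real" where
  "psi Q t = (if t > 0 then poly Q (1/t) * exp (- (1/t)) else 0)"

definition dQ :: "real poly \<Rightarrow> real poly" where
  "dQ Q = [:0,0,1:] * (Q - pderiv Q)"

lemma poly_exp_lim: "((\<lambda>s::real. poly P s * exp (- s)) \<longlongrightarrow> 0) at_top"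
proof -
  have eq: "poly P s * exp (- s) = (\<Sum>i\<le>degree P. coeff P i * (s ^ i / exp s))" for s :: real
    by (simp add: poly_altdef sum_distrib_right exp_minus divide_inverse mult.assoc)
  have "((\<lambda>s. \<Sum>i\<le>degree P. coeff P i * (s ^ i / exp s)) \<longlongrightarrow> (\<Sum>i\<le>degree P. coeff P i * 0)) at_top"
    by (intro tendsto_sum tendsto_mult tendsto_const tendsto_power_div_exp_0)
  then show ?thesis by (simp add: eq)
qed

lemma psi_deriv: "(psi Q has_real_derivative psi (dQ Q) t) (at t)"
proof (cases "t > 0")
  case True
  have d: "((\<lambda>t. poly Q (1/t) * exp (- (1/t))) has_real_derivative
      poly (pderiv Q) (1/t) * (- 1 / t\<^sup>2) * exp (- (1/t)) + poly Q (1/t) * (exp (- (1/t)) * (1 / t\<^sup>2))) (at t)"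
  proof -
    have i: "((\<lambda>t. 1/t) has_real_derivative - 1 / t\<^sup>2) (at t)"
      using True by (auto intro!: derivative_eq_intros simp: power2_eq_square)
    have p: "((\<lambda>t. poly Q (1/t)) has_real_derivative poly (pderiv Q) (1/t) * (- 1 / t\<^sup>2)) (at t)"
      by (rule DERIV_chain2[OF poly_DERIV i])
    have e: "((\<lambda>t. exp (- (1/t))) has_real_derivative exp (- (1/t)) * (1 / t\<^sup>2)) (at t)"
      using DERIV_chain2[OF DERIV_exp DERIV_minus[OF i]] by simp
    show ?thesis using DERIV_mult[OF p e] by (simp add: mult.commute)
  qed
  have val: "poly (pderiv Q) (1/t) * (- 1 / t\<^sup>2) * exp (- (1/t)) + poly Q (1/t) * (exp (- (1/t)) * (1 / t\<^sup>2))
      = psi (dQ Q) t"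
    using True by (simp add: psi_def dQ_def power2_eq_square field_simps)
  have ev: "\<forall>\<^sub>F s in nhds t. psi Q s = poly Q (1/s) * exp (- (1/s))"
    using eventually_nhds_in_open[of "{0<..}" t] True
    by (auto elim!: eventually_mono simp: psi_def)
  show ?thesis using d val DERIV_cong_ev[OF refl ev refl] by simp
next
  case False
  show ?thesis
  proof (cases "t < 0")
    case True
    have ev: "\<forall>\<^sub>F s in nhds t. psi Q s = 0"
      using eventually_nhds_in_open[of "{..<0}" t] True
      by (auto elim!: eventually_mono simp: psi_def)
    have "((\<lambda>s. 0) has_real_derivative 0) (at t)" by simp
    then have "(psi Q has_real_derivative 0) (at t)" using DERIV_cong_ev[OF refl ev refl] by simp
    then show ?thesis using True by (simp add: psi_def)
  next
    case False
    with \<open>\<not> t > 0\<close> have t0: "t = 0" by simp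
    have "((\<lambda>h. (psi Q (0 + h) - psi Q 0) / h) \<longlongrightarrow> 0) (at 0)"
    proof (rule filterlim_split_at)
      have "\<forall>\<^sub>F h in at_left (0::real). (psi Q (0 + h) - psi Q 0) / h = 0"
        by (auto simp: eventually_at_left_field psi_def intro: exI[of _ "-1"])
      then show "((\<lambda>h. (psi Q (0 + h) - psi Q 0) / h) \<longlongrightarrow> 0) (at_left 0)"
        by (rule tendsto_eventually)
      have ev: "\<forall>\<^sub>F h in at_right (0::real). (psi Q (0 + h) - psi Q 0) / h = poly ([:0,1:] * Q) (inverse h) * exp (- inverse h)"
        by (auto simp: eventually_at_right_field psi_def field_simps intro!: exI[of _ 1])
      have "((\<lambda>h. poly ([:0,1:] * Q) (inverse h) * exp (- inverse h)) \<longlongrightarrow> 0) (at_right 0)"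
        by (rule filterlim_compose[OF poly_exp_lim[of "[:0,1:] * Q"] filterlim_inverse_at_top_right])
      then show "((\<lambda>h. (psi Q (0 + h) - psi Q 0) / h) \<longlongrightarrow> 0) (at_right 0)"
        using tendsto_cong[OF ev] by blast
    qed
    then show ?thesis using t0 by (simp add: has_field_derivative_iff psi_def)
  qed
qed

lemma psi_nonneg: "psi 1 t \<ge> 0" by (simp add: psi_def)

inductive sm :: "(real^'n \<Rightarrow> real) \<Rightarrow> bool" where
  sm_const: "sm (\<lambda>x. c)"
| sm_coord: "sm (\<lambda>x. x $ k)"
| sm_add: "sm f \<Longrightarrow> sm g \<Longrightarrow> sm (\<lambda>x. f x + g x)"
| sm_mult: "sm f \<Longrightarrow> sm g \<Longrightarrow> sm (\<lambda>x. f x * g x)"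
| sm_psi: "sm f \<Longrightarrow> sm (\<lambda>x. psi Q (f x))"

lemma pd_eq:
  fixes F :: "real^'n \<Rightarrow> real"
  assumes "\<And>x. (F has_derivative F' x) (at x)"
  shows "pd i F = (\<lambda>x. F' x (axis i 1))"
  unfolding pd_def using assms frechet_derivative_at by metis

lemma sm_props:
  fixes f :: "real^'n \<Rightarrow> real"
  assumes "sm f"
  shows "(\<forall>x. f differentiable (at x)) \<and> (\<forall>i. sm (pd i f))"
  using assms
proof induction
  case (sm_const c)
  have "pd i (\<lambda>x::real^'n. c) = (\<lambda>x. 0)" for i
    using pd_eq[of "\<lambda>x::real^'n. c" "\<lambda>x v. 0"] by simp
  then show ?case by (auto intro: sm.sm_const)
next
  case (sm_coord k)
  have d: "((\<lambda>x::real^'n. x $ k) has_derivative (\<lambda>v. v $ k)) (at x)" for x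
    by (rule bounded_linear.has_derivative[OF bounded_linear_vec_nth]) (rule has_derivative_ident)
  have "pd i (\<lambda>x::real^'n. x $ k) = (\<lambda>x. axis i 1 $ k)" for i
    using pd_eq[of "\<lambda>x::real^'n. x $ k" "\<lambda>x v. v $ k", OF d] by simp
  then show ?case using d by (auto intro: sm.sm_const simp: differentiable_def)
next
  case (sm_add f g)
  have d: "((\<lambda>x. f x + g x) has_derivative (\<lambda>v. frechet_derivative f (at x) v + frechet_derivative g (at x) v)) (at x)" for x
    using sm_add.IH by (intro has_derivative_add) (auto simp: frechet_derivative_works[symmetric])
  have "pd i (\<lambda>x. f x + g x) = (\<lambda>x. pd i f x + pd i g x)" for i
    using pd_eq[OF d] by (simp add: pd_def)
  then show ?case using d sm_add.IH by (auto intro: sm.sm_add simp: differentiable_def)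
next
  case (sm_mult f g)
  have d: "((\<lambda>x. f x * g x) has_derivative (\<lambda>v. f x * frechet_derivative g (at x) v + frechet_derivative f (at x) v * g x)) (at x)" for x
    using sm_mult.IH by (intro has_derivative_mult) (auto simp: frechet_derivative_works[symmetric])
  have "pd i (\<lambda>x. f x * g x) = (\<lambda>x. f x * pd i g x + pd i f x * g x)" for i
    using pd_eq[OF d] by (simp add: pd_def)
  then show ?case using d sm_mult.IH sm_mult.hyps by (auto intro!: sm.sm_add sm.sm_mult simp: differentiable_def)
next
  case (sm_psi f Q)
  have d: "((\<lambda>x. psi Q (f x)) has_derivative (\<lambda>v. psi (dQ Q) (f x) * frechet_derivative f (at x) v)) (at x)" for x
  proof -
    have "(f has_derivative frechet_derivative f (at x)) (at x)"
      using sm_psi.IH by (auto simp: frechet_derivative_works[symmetric])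
    moreover have "(psi Q has_derivative (*) (psi (dQ Q) (f x))) (at (f x))"
      using psi_deriv[of Q "f x"] by (simp add: has_field_derivative_def)
    ultimately show ?thesis by (rule has_derivative_compose)
  qed
  have "pd i (\<lambda>x. psi Q (f x)) = (\<lambda>x. psi (dQ Q) (f x) * pd i f x)" for i
    using pd_eq[OF d] by (simp add: pd_def)
  then show ?case using d sm_psi.IH sm_psi.hyps by (auto intro!: sm.sm_mult sm.sm_psi simp: differentiable_def)
qed

lemma sm_Ck:
  fixes f :: "real^'n \<Rightarrow> real"
  shows "sm f \<Longrightarrow> Ck k f"
proof (induction k arbitrary: f)
  case 0
  then show ?case using sm_props[OF 0]
    by (auto intro!: continuous_at_imp_continuous_on differentiable_imp_continuous_within)
next
  case (Suc k)
  then show ?case using sm_props[OF Suc.prems]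
    by (auto intro!: continuous_at_imp_continuous_on differentiable_imp_continuous_within)
qed

lemma sm_sum:
  fixes g :: "'i \<Rightarrow> real^'n \<Rightarrow> real"
  shows "finite A \<Longrightarrow> (\<And>a. a \<in> A \<Longrightarrow> sm (g a)) \<Longrightarrow> sm (\<lambda>x. \<Sum>a\<in>A. g a x)"
proof (induction A rule: finite_induct)
  case empty
  then show ?case using sm_const[of 0] by simp
next
  case (insert a A)
  then show ?case by (simp add: sm_add)
qed

lemma bump_exists:
  fixes x0 :: "real^'n"
  assumes r: "r > 0"
  shows "\<exists>\<phi>. test_fun \<phi> \<and> (\<forall>x. \<phi> x \<ge> 0) \<and> \<phi> x0 > 0 \<and> (\<forall>x. \<phi> x \<noteq> 0 \<longrightarrow> dist x x0 < r)"
proof -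
  define \<phi> where "\<phi> = (\<lambda>x::real^'n. psi 1 (r^2 + (-1) * (\<Sum>k\<in>UNIV. (x$k + - x0$k) * (x$k + - x0$k))))"
  have sk: "sm (\<lambda>x::real^'n. (x$k + - x0$k) * (x$k + - x0$k))" for k
    by (intro sm_mult sm_add sm_coord sm_const)
  have s1: "sm (\<lambda>x::real^'n. \<Sum>k\<in>UNIV. (x$k + - x0$k) * (x$k + - x0$k))"
    apply (rule sm_sum) apply simp by (rule sk)
  have "sm \<phi>" unfolding \<phi>_def
    by (intro sm_psi sm_add sm_const sm_mult s1)
  then have smooth: "smooth_fun \<phi>" unfolding smooth_fun_def using sm_Ck by blast
  have sq: "(\<Sum>k\<in>UNIV. (x$k + - x0$k) * (x$k + - x0$k)) = (dist x x0)^2" for x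
    by (simp add: dist_norm power2_norm_eq_inner inner_vec_def)
  have phi_eq: "\<phi> x = psi 1 (r^2 - (dist x x0)^2)" for x unfolding \<phi>_def sq by simp
  have nz: "dist x x0 < r" if "\<phi> x \<noteq> 0" for x
  proof -
    have "r^2 - (dist x x0)^2 > 0" using that by (auto simp: phi_eq psi_def split: if_splits)
    then have "(dist x x0)^2 < r^2" by simp
    then show ?thesis using r by (simp add: power_less_imp_less_base)
  qed
  have "closure {x. \<phi> x \<noteq> 0} \<subseteq> cball x0 r"
    using nz by (intro closure_minimal) (auto simp: dist_commute less_imp_le)
  then have "compact (closure {x. \<phi> x \<noteq> 0})"
    using compact_cball bounded_subset compact_eq_bounded_closed compact_imp_bounded closed_closure by metis
  then have "test_fun \<phi>" using smooth unfolding test_fun_def by blast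
  moreover have "\<phi> x \<ge> 0" for x by (simp add: phi_eq psi_def)
  moreover have "\<phi> x0 > 0" using r by (simp add: phi_eq psi_def)
  ultimately show ?thesis using nz by blast
qed

lemma quad_expand:
  fixes A :: "real^'n^'n" and v :: "real^'n"
  shows "v \<bullet> (A *v v) = (\<Sum>i\<in>UNIV. \<Sum>j\<in>UNIV. v$i * v$j * A$i$j)"
  by (simp add: inner_vec_def matrix_vector_mult_def sum_distrib_left mult_ac)

lemma int_pos:
  fixes g :: "real^'n \<Rightarrow> real"
  assumes gc: "continuous_on UNIV g" and g0: "\<And>x. g x \<ge> 0" and gx0: "g x0 > 0"
    and gi: "integrable lebesgue g"
  shows "(\<integral>x. g x \<partial>lebesgue) > 0"
proof -
  have gm: "g \<in> borel_measurable borel" using gc by (rule borel_measurable_continuous_onI)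
  have "isCont g x0" using gc by (simp add: continuous_on_eq_continuous_at)
  then obtain \<delta> where \<delta>: "\<delta> > 0" "\<And>x. dist x x0 < \<delta> \<Longrightarrow> dist (g x) (g x0) < g x0 / 2"
    using gx0 unfolding continuous_at_eps_delta by (metis half_gt_zero)
  have lo: "g x \<ge> g x0 / 2 * indicator (ball x0 \<delta>) x" for x
  proof (cases "x \<in> ball x0 \<delta>")
    case True
    then have "dist (g x) (g x0) < g x0 / 2" using \<delta>(2)[of x] by (simp add: dist_commute)
    then have "g x > g x0 / 2" unfolding dist_real_def by linarith
    then show ?thesis using True by simp
  qed (use g0 in auto)
  have ii: "integrable lborel (\<lambda>x::real^'n. g x0 / 2 * indicator (ball x0 \<delta>) x)"
    using emeasure_lborel_ball_finite[of x0 \<delta>] by (intro integrable_mult_right integrable_real_indicator) auto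
  have gi': "integrable lborel g" using gi gm by (simp add: integrable_completion)
  have "(\<integral>x. g x0 / 2 * indicator (ball x0 \<delta>) x \<partial>lborel) \<le> (\<integral>x. g x \<partial>lborel)"
    by (rule integral_mono[OF ii gi' lo])
  moreover have "(\<integral>x. g x0 / 2 * indicator (ball x0 \<delta>) x \<partial>lborel) = g x0 / 2 * Henstock_Kurzweil_Integration.content (ball x0 \<delta>)"
    by simp
  moreover have "Henstock_Kurzweil_Integration.content (ball x0 \<delta>) > 0" using content_ball_pos \<delta> by blast
  moreover have "g x0 / 2 * Henstock_Kurzweil_Integration.content (ball x0 \<delta>) > 0"
    using gx0 \<open>Henstock_Kurzweil_Integration.content (ball x0 \<delta>) > 0\<close> by simp
  ultimately have "(\<integral>x. g x \<partial>lborel) > 0" by linarith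
  then show ?thesis using gm by (simp add: integral_completion)
qed

lemma loc_int_mult:
  fixes g \<phi> :: "real^'n \<Rightarrow> real"
  assumes gl: "loc_integrable g" and \<phi>c: "continuous_on UNIV \<phi>"
    and \<phi>s: "\<And>x. \<phi> x \<noteq> 0 \<Longrightarrow> x \<in> cball x0 \<delta>"
  shows "integrable lebesgue (\<lambda>x. g x * \<phi> x)"
proof -
  let ?K = "cball x0 \<delta>"
  have si: "integrable lebesgue (\<lambda>x. indicator ?K x *\<^sub>R g x)"
    using gl unfolding loc_integrable_def set_integrable_def by auto
  obtain B where B: "\<And>x. norm x \<le> norm x0 + \<delta> \<Longrightarrow> \<bar>\<phi> x\<bar> \<le> B" "B \<ge> 0"
    using cont_bdd[OF \<phi>c] by metis
  have \<phi>B: "\<bar>\<phi> x\<bar> \<le> B" for x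
  proof (cases "\<phi> x = 0")
    case False
    then have "x \<in> ?K" using \<phi>s by blast
    then have "norm x \<le> norm x0 + \<delta>" using norm_triangle_ineq[of x0 "x - x0"]
      by (auto simp: dist_norm norm_minus_commute)
    then show ?thesis using B by blast
  qed (use B in auto)
  have eq: "g x * \<phi> x = (indicator ?K x *\<^sub>R g x) * \<phi> x" for x
    using \<phi>s[of x] by (cases "x \<in> ?K") auto
  have m1: "(\<lambda>x. indicator ?K x *\<^sub>R g x) \<in> borel_measurable lebesgue"
    using si by (rule borel_measurable_integrable)
  have m2: "\<phi> \<in> borel_measurable lebesgue"
    using borel_measurable_continuous_onI[OF \<phi>c] by (simp add: measurable_completion)
  have "integrable lebesgue (\<lambda>x. (indicator ?K x *\<^sub>R g x) * \<phi> x)"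
  proof (rule Bochner_Integration.integrable_bound)
    show "integrable lebesgue (\<lambda>x. B * (indicator ?K x *\<^sub>R g x))" using si by simp
    show "(\<lambda>x. (indicator ?K x *\<^sub>R g x) * \<phi> x) \<in> borel_measurable lebesgue" using m1 m2 by measurable
    show "AE x in lebesgue. norm ((indicator ?K x *\<^sub>R g x) * \<phi> x) \<le> norm (B * (indicator ?K x *\<^sub>R g x))"
    proof (intro AE_I2)
      fix x
      have "indicator ?K x * \<bar>g x\<bar> * \<bar>\<phi> x\<bar> \<le> indicator ?K x * \<bar>g x\<bar> * B"
        using \<phi>B[of x] by (intro mult_left_mono) auto
      then show "norm ((indicator ?K x *\<^sub>R g x) * \<phi> x) \<le> norm (B * (indicator ?K x *\<^sub>R g x))"
        using B by (simp add: abs_mult mult_ac)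
    qed
  qed
  then show ?thesis by (simp add: eq)
qed

lemma int_quad:
  fixes H :: "real^'n \<Rightarrow> real^'n^'n" and \<phi> :: "real^'n \<Rightarrow> real"
  assumes "\<And>i j. integrable lebesgue (\<lambda>x. H x $ i $ j * \<phi> x)"
  shows "integrable lebesgue (\<lambda>x. v \<bullet> (H x *v v) * \<phi> x)"
    "(\<integral>x. v \<bullet> (H x *v v) * \<phi> x \<partial>lebesgue) = (\<Sum>i\<in>UNIV. \<Sum>j\<in>UNIV. v$i * v$j * (\<integral>x. H x $ i $ j * \<phi> x \<partial>lebesgue))"
proof -
  have eq: "v \<bullet> (H x *v v) * \<phi> x = (\<Sum>i\<in>UNIV. \<Sum>j\<in>UNIV. v$i * v$j * (H x $ i $ j * \<phi> x))" for x
    by (simp add: quad_expand sum_distrib_left mult_ac)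
  show "integrable lebesgue (\<lambda>x. v \<bullet> (H x *v v) * \<phi> x)"
    unfolding eq by (intro Bochner_Integration.integrable_sum integrable_mult_right assms)
  show "(\<integral>x. v \<bullet> (H x *v v) * \<phi> x \<partial>lebesgue) = (\<Sum>i\<in>UNIV. \<Sum>j\<in>UNIV. v$i * v$j * (\<integral>x. H x $ i $ j * \<phi> x \<partial>lebesgue))"
  proof -
    have "(\<integral>x. (\<Sum>i\<in>UNIV. \<Sum>j\<in>UNIV. v$i * v$j * (H x $ i $ j * \<phi> x)) \<partial>lebesgue)
        = (\<Sum>i\<in>UNIV. (\<integral>x. (\<Sum>j\<in>UNIV. v$i * v$j * (H x $ i $ j * \<phi> x)) \<partial>lebesgue))"
      apply (rule Bochner_Integration.integral_sum) apply (rule Bochner_Integration.integrable_sum) apply (rule integrable_mult_right) by (rule assms)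
    also have "\<dots> = (\<Sum>i\<in>UNIV. \<Sum>j\<in>UNIV. (\<integral>x. v$i * v$j * (H x $ i $ j * \<phi> x) \<partial>lebesgue))"
      apply (rule sum.cong[OF refl], rule Bochner_Integration.integral_sum) apply (rule integrable_mult_right) by (rule assms)
    also have "\<dots> = (\<Sum>i\<in>UNIV. \<Sum>j\<in>UNIV. v$i * v$j * (\<integral>x. H x $ i $ j * \<phi> x \<partial>lebesgue))"
      by simp
    finally show ?thesis unfolding eq .
  qed
qed

lemma abstract_no_bound:
  fixes u :: "real^'n \<Rightarrow> real" and Gu :: "real^'n \<Rightarrow> real^'n" and Hm :: "real^'n \<Rightarrow> real^'n^'n"
  assumes ud: "\<And>x. (u has_derivative (\<lambda>v. Gu x \<bullet> v)) (at x)"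
    and Gc: "continuous_on UNIV Gu"
    and Hd: "\<And>x. x \<notin> N \<Longrightarrow> (Gu has_derivative (\<lambda>v. Hm x *v v)) (at x)"
    and Hmeas: "\<And>i j. (\<lambda>x. Hm x $ i $ j) \<in> borel_measurable borel"
    and Hb: "\<And>x i j. \<bar>Hm x $ i $ j\<bar> \<le> C"
    and Nnull: "N \<in> null_sets lebesgue"
    and Nline: "\<And>x j. x \<notin> N \<Longrightarrow> finite {t. x + t *\<^sub>R axis j 1 \<in> N}"
    and qc: "isCont (\<lambda>x. v \<bullet> (Hm x *v v)) x0"
    and viol: "v \<bullet> (Hm x0 *v v) > norm v ^ 2"
  shows "\<not> (\<exists>H. weak_hessian u H \<and> (AE x in lebesgue. \<forall>v. \<bar>v \<bullet> (H x *v v)\<bar> \<le> norm v ^ 2))"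
proof
  assume "\<exists>H. weak_hessian u H \<and> (AE x in lebesgue. \<forall>v. \<bar>v \<bullet> (H x *v v)\<bar> \<le> norm v ^ 2)"
  then obtain H where wh: "weak_hessian u H" and AEb: "AE x in lebesgue. \<forall>v. \<bar>v \<bullet> (H x *v v)\<bar> \<le> norm v ^ 2"
    by blast
  define \<epsilon> where "\<epsilon> = (v \<bullet> (Hm x0 *v v) - norm v ^ 2) / 2"
  have \<epsilon>: "\<epsilon> > 0" using viol by (simp add: \<epsilon>_def)
  obtain \<delta> where \<delta>: "\<delta> > 0" "\<And>x. dist x x0 < \<delta> \<Longrightarrow> dist (v \<bullet> (Hm x *v v)) (v \<bullet> (Hm x0 *v v)) < \<epsilon>"
    using qc \<epsilon> unfolding continuous_at_eps_delta by blast
  obtain \<phi> where \<phi>: "test_fun \<phi>" "\<And>x. \<phi> x \<ge> 0" "\<phi> x0 > 0" "\<And>x. \<phi> x \<noteq> 0 \<Longrightarrow> dist x x0 < \<delta>"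
    using bump_exists[OF \<delta>(1), of x0] by blast
  have \<phi>c: "continuous_on UNIV \<phi>" using test_fun_basic(1)[OF \<phi>(1)] .
  have \<phi>s: "\<phi> x \<noteq> 0 \<Longrightarrow> x \<in> cball x0 \<delta>" for x using \<phi>(4)[of x] by (auto simp: dist_commute)
  have wp: "weak_pd2 u i j (\<lambda>x. H x $ i $ j)" for i j using wh unfolding weak_hessian_def by blast
  have eqij: "(\<integral>x. H x $ i $ j * \<phi> x \<partial>lebesgue) = (\<integral>x. Hm x $ i $ j * \<phi> x \<partial>lebesgue)" for i j
  proof -
    have "(\<integral>x. u x * pd i (pd j \<phi>) x \<partial>lebesgue) = (\<integral>x. H x $ i $ j * \<phi> x \<partial>lebesgue)"
      using wp[of i j] \<phi>(1) unfolding weak_pd2_def by blast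
    moreover have "(\<integral>x. u x * pd i (pd j \<phi>) x \<partial>lebesgue) = (\<integral>x. Hm x $ i $ j * \<phi> x \<partial>lebesgue)"
      by (rule abstract_weak(3)[OF ud Gc Hd Hmeas Hb Nnull Nline \<phi>(1)])
    ultimately show ?thesis by simp
  qed
  have iH: "integrable lebesgue (\<lambda>x. H x $ i $ j * \<phi> x)" for i j
  proof -
    have "loc_integrable (\<lambda>x. H x $ i $ j)" using wp[of i j] unfolding weak_pd2_def by blast
    then show ?thesis by (rule loc_int_mult[OF _ \<phi>c \<phi>s])
  qed
  have iM: "integrable lebesgue (\<lambda>x. Hm x $ i $ j * \<phi> x)" for i j
  proof -
    have "loc_integrable (\<lambda>x. Hm x $ i $ j)" using Hb by (intro bdd_loc_integrable[OF Hmeas]) blast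
    then show ?thesis by (rule loc_int_mult[OF _ \<phi>c \<phi>s])
  qed
  have i1: "integrable lebesgue (\<lambda>x. 1 * \<phi> x)"
  proof -
    have "loc_integrable (\<lambda>x::real^'n. 1)" by (rule bdd_loc_integrable) auto
    then show ?thesis by (rule loc_int_mult[OF _ \<phi>c \<phi>s])
  qed
  have eqQ: "(\<integral>x. v \<bullet> (H x *v v) * \<phi> x \<partial>lebesgue) = (\<integral>x. v \<bullet> (Hm x *v v) * \<phi> x \<partial>lebesgue)"
    unfolding int_quad(2)[OF iH] int_quad(2)[OF iM] eqij ..
  have le1: "(\<integral>x. v \<bullet> (H x *v v) * \<phi> x \<partial>lebesgue) \<le> (\<integral>x. norm v ^ 2 * \<phi> x \<partial>lebesgue)"
  proof (rule integral_mono_AE)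
    show "integrable lebesgue (\<lambda>x. v \<bullet> (H x *v v) * \<phi> x)" by (rule int_quad(1)[OF iH])
    show "integrable lebesgue (\<lambda>x. norm v ^ 2 * \<phi> x)" using i1 by simp
    show "AE x in lebesgue. v \<bullet> (H x *v v) * \<phi> x \<le> norm v ^ 2 * \<phi> x"
      using AEb
    proof eventually_elim
      case (elim x)
      then have "v \<bullet> (H x *v v) \<le> norm v ^ 2" by (simp add: abs_le_iff)
      then show ?case using \<phi>(2)[of x] by (rule mult_right_mono)
    qed
  qed
  have le2: "(\<integral>x. (norm v ^ 2 + \<epsilon>) * \<phi> x \<partial>lebesgue) \<le> (\<integral>x. v \<bullet> (Hm x *v v) * \<phi> x \<partial>lebesgue)"
  proof (rule integral_mono)
    show "integrable lebesgue (\<lambda>x. (norm v ^ 2 + \<epsilon>) * \<phi> x)" using i1 by simp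
    show "integrable lebesgue (\<lambda>x. v \<bullet> (Hm x *v v) * \<phi> x)" by (rule int_quad(1)[OF iM])
    fix x show "(norm v ^ 2 + \<epsilon>) * \<phi> x \<le> v \<bullet> (Hm x *v v) * \<phi> x"
    proof (cases "\<phi> x = 0")
      case False
      then have "dist (v \<bullet> (Hm x *v v)) (v \<bullet> (Hm x0 *v v)) < \<epsilon>" using \<delta>(2) \<phi>(4) by blast
      then have "v \<bullet> (Hm x0 *v v) - v \<bullet> (Hm x *v v) < \<epsilon>"
        using abs_ge_minus_self[of "v \<bullet> (Hm x *v v) - v \<bullet> (Hm x0 *v v)"] unfolding dist_real_def by linarith
      then have "norm v ^ 2 + \<epsilon> \<le> v \<bullet> (Hm x *v v)"
        unfolding \<epsilon>_def by (simp add: field_simps)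
      then show ?thesis using \<phi>(2)[of x] by (rule mult_right_mono)
    qed simp
  qed
  have pos: "(\<integral>x. \<phi> x \<partial>lebesgue) > 0"
    using int_pos[OF \<phi>c \<phi>(2) \<phi>(3)] i1 by simp
  have "(norm v ^ 2 + \<epsilon>) * (\<integral>x. \<phi> x \<partial>lebesgue) \<le> norm v ^ 2 * (\<integral>x. \<phi> x \<partial>lebesgue)"
    using le1 le2 eqQ by simp
  then have "\<epsilon> * (\<integral>x. \<phi> x \<partial>lebesgue) \<le> 0" by (simp add: distrib_right)
  moreover have "\<epsilon> * (\<integral>x. \<phi> x \<partial>lebesgue) > 0" using pos \<epsilon> by simp
  ultimately show False by linarith
qed


lemma deriv_glue:
  fixes f g1 g2 :: "real \<Rightarrow> real"
  assumes g1: "(g1 has_real_derivative d) (at t0)" and g2: "(g2 has_real_derivative d) (at t0)"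
    and e1: "\<And>s. s \<le> t0 \<Longrightarrow> f s = g1 s" and e2: "\<And>s. s \<ge> t0 \<Longrightarrow> f s = g2 s"
  shows "(f has_real_derivative d) (at t0)"
proof -
  have q1: "((\<lambda>h. (g1 (t0 + h) - g1 t0) / h) \<longlongrightarrow> d) (at 0)" using g1 by (simp add: DERIV_def)
  have q2: "((\<lambda>h. (g2 (t0 + h) - g2 t0) / h) \<longlongrightarrow> d) (at 0)" using g2 by (simp add: DERIV_def)
  have "((\<lambda>h. (f (t0 + h) - f t0) / h) \<longlongrightarrow> d) (at 0)"
  proof (rule filterlim_split_at)
    have ev: "\<forall>\<^sub>F h in at_left (0::real). (g1 (t0 + h) - g1 t0) / h = (f (t0 + h) - f t0) / h"
      unfolding eventually_at_left_field using e1 by (intro exI[of _ "-1"]) auto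
    show "((\<lambda>h. (f (t0 + h) - f t0) / h) \<longlongrightarrow> d) (at_left 0)"
      using q1 ev unfolding filterlim_at_split by (blast intro: Lim_transform_eventually)
    have ev2: "\<forall>\<^sub>F h in at_right (0::real). (g2 (t0 + h) - g2 t0) / h = (f (t0 + h) - f t0) / h"
      unfolding eventually_at_right_field using e2 by (intro exI[of _ "1"]) auto
    show "((\<lambda>h. (f (t0 + h) - f t0) / h) \<longlongrightarrow> d) (at_right 0)"
      using q2 ev2 unfolding filterlim_at_split by (blast intro: Lim_transform_eventually)
  qed
  then show ?thesis by (simp add: DERIV_def)
qed

locale Prof =
  fixes al :: real
  assumes al_gt: "al > 1/2"
begin

definition "A = pi / (2 * al)"
definition "be = al / (4 * al - 1)"

lemma al_pos: "al > 0" using al_gt by simp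
lemma A_pos: "A > 0" using al_gt by (simp add: A_def)
lemma A_lt_pi: "A < pi"
  using al_gt pi_gt_zero by (simp add: A_def divide_less_eq)
lemma al_A: "2 * al * A = pi" using al_pos by (simp add: A_def)
lemma be_pos: "be > 0" using al_gt by (simp add: be_def)
lemma be_lt: "be < 1/2" using al_gt by (simp add: be_def divide_less_eq)
lemma be_ne_al: "be \<noteq> al" using al_gt be_lt by linarith
lemma be_A: "2 * be * (2 * pi - A) = pi"
proof -
  have "4 * al - 1 > 0" using al_gt by simp
  then show ?thesis using al_pos by (simp add: be_def A_def field_simps)
qed

definition "f1 t = (if t < 0 then cos (2 * be * t) else cos (2 * al * t))"
definition "f1' t = (if t < 0 then - (2 * be) * sin (2 * be * t) else - (2 * al) * sin (2 * al * t))"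
definition "f1'' t = (if t < 0 then - (4 * be\<^sup>2) * cos (2 * be * t) else - (4 * al\<^sup>2) * cos (2 * al * t))"
definition "f2 t = (if t < A then cos (2 * al * t) else cos (2 * be * (2 * pi - t)))"
definition "f2' t = (if t < A then - (2 * al) * sin (2 * al * t) else 2 * be * sin (2 * be * (2 * pi - t)))"
definition "f2'' t = (if t < A then - (4 * al\<^sup>2) * cos (2 * al * t) else - (4 * be\<^sup>2) * cos (2 * be * (2 * pi - t)))"

lemma dcos: "((\<lambda>t. cos (c * t)) has_real_derivative - c * sin (c * t)) (at t)"
  by (auto intro!: derivative_eq_intros)
lemma dsin: "((\<lambda>t. sin (c * t)) has_real_derivative c * cos (c * t)) (at t)"
  by (auto intro!: derivative_eq_intros)
lemma dcos2: "((\<lambda>t. cos (c * (d - t))) has_real_derivative c * sin (c * (d - t))) (at t)"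
  by (auto intro!: derivative_eq_intros)
lemma dsin2: "((\<lambda>t. sin (c * (d - t))) has_real_derivative - c * cos (c * (d - t))) (at t)"
  by (auto intro!: derivative_eq_intros)

lemma f1_deriv: "(f1 has_real_derivative f1' t) (at t)"
proof -
  consider "t < 0" | "t = 0" | "t > 0" by linarith
  then show ?thesis
  proof cases
    case 1
    have ev: "\<forall>\<^sub>F s in nhds t. f1 s = cos (2 * be * s)"
      using eventually_nhds_in_open[of "{..<0}" t] 1 by (auto elim!: eventually_mono simp: f1_def)
    show ?thesis using DERIV_cong_ev[OF refl ev refl] dcos[of "2 * be" t] 1 by (simp add: f1'_def)
  next
    case 3
    have ev: "\<forall>\<^sub>F s in nhds t. f1 s = cos (2 * al * s)"
      using eventually_nhds_in_open[of "{0<..}" t] 3 by (auto elim!: eventually_mono simp: f1_def)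
    show ?thesis using DERIV_cong_ev[OF refl ev refl] dcos[of "2 * al" t] 3 by (simp add: f1'_def)
  next
    case 2
    show ?thesis
      using deriv_glue[of "\<lambda>t. cos (2 * be * t)" 0 0 "\<lambda>t. cos (2 * al * t)" f1] dcos[of "2 * be" 0] dcos[of "2 * al" 0] 2
      by (auto simp: f1_def f1'_def)
  qed
qed

lemma f1'_deriv: "t \<noteq> 0 \<Longrightarrow> (f1' has_real_derivative f1'' t) (at t)"
proof -
  assume t: "t \<noteq> 0"
  consider "t < 0" | "t > 0" using t by linarith
  then show ?thesis
  proof cases
    case 1
    have ev: "\<forall>\<^sub>F s in nhds t. f1' s = - (2 * be) * sin (2 * be * s)"
      using eventually_nhds_in_open[of "{..<0}" t] 1 by (auto elim!: eventually_mono simp: f1'_def)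
    show ?thesis using DERIV_cong_ev[OF refl ev refl] DERIV_cmult[OF dsin[of "2 * be" t], of "- (2 * be)"] 1
      by (simp add: f1''_def power2_eq_square mult_ac)
  next
    case 2
    have ev: "\<forall>\<^sub>F s in nhds t. f1' s = - (2 * al) * sin (2 * al * s)"
      using eventually_nhds_in_open[of "{0<..}" t] 2 by (auto elim!: eventually_mono simp: f1'_def)
    show ?thesis using DERIV_cong_ev[OF refl ev refl] DERIV_cmult[OF dsin[of "2 * al" t], of "- (2 * al)"] 2
      by (simp add: f1''_def power2_eq_square mult_ac)
  qed
qed

lemma f2_deriv: "(f2 has_real_derivative f2' t) (at t)"
proof -
  consider "t < A" | "t = A" | "t > A" by linarith
  then show ?thesis
  proof cases
    case 1
    have ev: "\<forall>\<^sub>F s in nhds t. f2 s = cos (2 * al * s)"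
      using eventually_nhds_in_open[of "{..<A}" t] 1 by (auto elim!: eventually_mono simp: f2_def)
    show ?thesis using DERIV_cong_ev[OF refl ev refl] dcos[of "2 * al" t] 1 by (simp add: f2'_def)
  next
    case 3
    have ev: "\<forall>\<^sub>F s in nhds t. f2 s = cos (2 * be * (2 * pi - s))"
      using eventually_nhds_in_open[of "{A<..}" t] 3 by (auto elim!: eventually_mono simp: f2_def)
    show ?thesis using DERIV_cong_ev[OF refl ev refl] dcos2[of "2 * be" "2 * pi" t] 3 by (simp add: f2'_def)
  next
    case 2
    have s1: "sin (2 * al * A) = 0" using al_A by simp
    have s2: "sin (2 * be * (2 * pi - A)) = 0" using be_A by simp
    have c1: "cos (2 * al * A) = cos (2 * be * (2 * pi - A))" using al_A be_A by simp
    have e1: "f2 s = cos (2 * al * s)" if "s \<le> A" for s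
      using that c1 by (cases "s < A") (auto simp: f2_def)
    have e2: "f2 s = cos (2 * be * (2 * pi - s))" if "s \<ge> A" for s
      using that c1 by (cases "s = A") (auto simp: f2_def)
    have "(f2 has_real_derivative - (2 * al) * sin (2 * al * A)) (at A)"
      apply (rule deriv_glue[OF dcos[of "2 * al" A]])
      using dcos2[of "2 * be" "2 * pi" A] s1 s2 e1 e2 by auto
    then show ?thesis using 2 s1 s2 by (simp add: f2'_def)
  qed
qed

lemma f2'_deriv: "t \<noteq> A \<Longrightarrow> (f2' has_real_derivative f2'' t) (at t)"
proof -
  assume t: "t \<noteq> A"
  consider "t < A" | "t > A" using t by linarith
  then show ?thesis
  proof cases
    case 1
    have ev: "\<forall>\<^sub>F s in nhds t. f2' s = - (2 * al) * sin (2 * al * s)"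
      using eventually_nhds_in_open[of "{..<A}" t] 1 by (auto elim!: eventually_mono simp: f2'_def)
    show ?thesis using DERIV_cong_ev[OF refl ev refl] DERIV_cmult[OF dsin[of "2 * al" t], of "- (2 * al)"] 1
      by (simp add: f2''_def power2_eq_square mult_ac)
  next
    case 2
    have ev: "\<forall>\<^sub>F s in nhds t. f2' s = 2 * be * sin (2 * be * (2 * pi - s))"
      using eventually_nhds_in_open[of "{A<..}" t] 2 by (auto elim!: eventually_mono simp: f2'_def)
    show ?thesis using DERIV_cong_ev[OF refl ev refl] DERIV_cmult[OF dsin2[of "2 * be" "2 * pi" t], of "2 * be"] 2
      by (simp add: f2''_def power2_eq_square mult_ac)
  qed
qed

lemma f2''_cont: "t \<noteq> A \<Longrightarrow> isCont f2'' t"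
proof -
  assume t: "t \<noteq> A"
  consider "t < A" | "t > A" using t by linarith
  then show ?thesis
  proof cases
    case 1
    have ev: "\<forall>\<^sub>F s in nhds t. f2'' s = - (4 * al\<^sup>2) * cos (2 * al * s)"
      using eventually_nhds_in_open[of "{..<A}" t] 1 by (auto elim!: eventually_mono simp: f2''_def)
    have "isCont (\<lambda>s. - (4 * al\<^sup>2) * cos (2 * al * s)) t" by (intro continuous_intros)
    then show ?thesis using isCont_cong[OF ev] by blast
  next
    case 2
    have ev: "\<forall>\<^sub>F s in nhds t. f2'' s = - (4 * be\<^sup>2) * cos (2 * be * (2 * pi - s))"
      using eventually_nhds_in_open[of "{A<..}" t] 2 by (auto elim!: eventually_mono simp: f2''_def)
    have "isCont (\<lambda>s. - (4 * be\<^sup>2) * cos (2 * be * (2 * pi - s))) t" by (intro continuous_intros)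
    then show ?thesis using isCont_cong[OF ev] by blast
  qed
qed

lemma f2_cont: "isCont f2 t" using f2_deriv DERIV_isCont by blast
lemma f2'_cont: "isCont f2' t"
proof (cases "t = A")
  case False then show ?thesis using f2'_deriv DERIV_isCont by blast
next
  case True
  have s1: "sin (2 * al * A) = 0" using al_A by simp
  have s2: "sin (2 * be * (2 * pi - A)) = 0" using be_A by simp
  have l: "((\<lambda>s. - (2 * al) * sin (2 * al * s)) \<longlongrightarrow> 0) (at_left A)"
    using s1 by (intro tendsto_eq_intros) (auto intro: tendsto_ident_at)
  have r: "((\<lambda>s. 2 * be * sin (2 * be * (2 * pi - s))) \<longlongrightarrow> 0) (at_right A)"
    using s2 by (intro tendsto_eq_intros) (auto intro: tendsto_ident_at)
  have l': "(f2' \<longlongrightarrow> 0) (at_left A)"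
    using l by (rule Lim_transform_eventually) (auto simp: eventually_at_left_field f2'_def intro!: exI[of _ "A - 1"])
  have r': "(f2' \<longlongrightarrow> 0) (at_right A)"
    using r by (rule Lim_transform_eventually) (auto simp: eventually_at_right_field f2'_def intro!: exI[of _ "A + 1"])
  have "f2' A = 0" using s2 by (simp add: f2'_def)
  then show ?thesis using True l' r' by (simp add: isCont_def filterlim_split_at)
qed

lemma f1_cont: "isCont f1 t" using f1_deriv DERIV_isCont by blast
lemma f1'_cont: "isCont f1' t"
proof (cases "t = 0")
  case False then show ?thesis using f1'_deriv DERIV_isCont by blast
next
  case True
  have l: "((\<lambda>s. - (2 * be) * sin (2 * be * s)) \<longlongrightarrow> 0) (at_left 0)"
    by (intro tendsto_eq_intros) (auto intro: tendsto_ident_at)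
  have r: "((\<lambda>s. - (2 * al) * sin (2 * al * s)) \<longlongrightarrow> 0) (at_right 0)"
    by (intro tendsto_eq_intros) (auto intro: tendsto_ident_at)
  have l': "(f1' \<longlongrightarrow> 0) (at_left 0)"
    using l by (rule Lim_transform_eventually) (auto simp: eventually_at_left_field f1'_def intro!: exI[of _ "- 1"])
  have r': "(f1' \<longlongrightarrow> 0) (at_right 0)"
    using r by (rule Lim_transform_eventually) (auto simp: eventually_at_right_field f1'_def intro!: exI[of _ "1"])
  have "f1' 0 = 0" by (simp add: f1'_def)
  then show ?thesis using True l' r' by (simp add: isCont_def filterlim_split_at)
qed

lemma f1_eq_f2: "0 \<le> t \<Longrightarrow> t < A \<Longrightarrow> f1 t = f2 t" "0 \<le> t \<Longrightarrow> t < A \<Longrightarrow> f1' t = f2' t"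
  "0 \<le> t \<Longrightarrow> t < A \<Longrightarrow> f1'' t = f2'' t"
  by (auto simp: f1_def f2_def f1'_def f2'_def f1''_def f2''_def)

lemma f1_eq_f2_shift: "- pi < t \<Longrightarrow> t < 0 \<Longrightarrow> f1 t = f2 (t + 2 * pi)"
  "- pi < t \<Longrightarrow> t < 0 \<Longrightarrow> f1' t = f2' (t + 2 * pi)"
  "- pi < t \<Longrightarrow> t < 0 \<Longrightarrow> f1'' t = f2'' (t + 2 * pi)"
proof -
  assume t: "- pi < t" "t < 0"
  then have nA: "\<not> t + 2 * pi < A" using A_lt_pi by linarith
  have e: "2 * be * (2 * pi - (t + 2 * pi)) = - (2 * be * t)" by (simp add: algebra_simps)
  show "f1 t = f2 (t + 2 * pi)" using t nA by (simp add: f1_def f2_def e)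
  show "f1' t = f2' (t + 2 * pi)" using t nA by (simp add: f1'_def f2'_def e)
  show "f1'' t = f2'' (t + 2 * pi)" using t nA by (simp add: f1''_def f2''_def e)
qed

lemma prof_h_eq: "0 \<le> t \<Longrightarrow> t < 2 * pi \<Longrightarrow> prof_h al be t = f2 t"
proof -
  assume t: "0 \<le> t" "t < 2 * pi"
  have "\<lfloor>t / (2 * pi)\<rfloor> = 0" using t by (simp add: floor_eq_iff divide_less_eq)
  then show ?thesis by (simp add: prof_h_def f2_def A_def Let_def)
qed

end


lemma Arg_Arg2pi_upper: "Im z \<ge> 0 \<Longrightarrow> Arg z = Arg2pi z"
proof (cases "z = 0")
  case True then show ?thesis by (simp add: Arg_zero)
next
  case False
  assume "Im z \<ge> 0"
  then have a: "0 \<le> Arg z" by (simp add: Arg_less_0)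
  have l2: "Arg z < 2 * pi" using Arg_le_pi[of z] pi_gt_zero by linarith
  have "Arg2pi z = Arg z"
    apply (rule Arg2pi_unique[of "norm z"])
    using l2 apply (simp_all)
    using Arg_eq[OF False] a Arg_le_pi[of z] pi_gt_zero False by (auto simp: less_le_trans)
  then show ?thesis by simp
qed

lemma Arg_Arg2pi_lower: "Im z < 0 \<Longrightarrow> Arg2pi z = Arg z + 2 * pi"
proof -
  assume im: "Im z < 0"
  then have z: "z \<noteq> 0" by auto
  have a: "Arg z < 0" using im by (simp add: Arg_neg_iff)
  have "exp (\<i> * complex_of_real (Arg z + 2 * pi)) = exp (\<i> * complex_of_real (Arg z))"
    by (simp add: distrib_left exp_add exp_two_pi_i'[unfolded mult.commute[of "complex_of_real pi"]])
  then show ?thesis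
    apply (intro Arg2pi_unique[of "norm z"])
    using Arg_eq[OF z] a mpi_less_Arg[of z] z by auto
qed

lemma Arg_deriv: "z \<notin> \<real>\<^sub>\<le>\<^sub>0 \<Longrightarrow> (Arg has_derivative (\<lambda>w. Im (w / z))) (at z)"
proof -
  assume z: "z \<notin> \<real>\<^sub>\<le>\<^sub>0"
  then have z0: "z \<noteq> 0" by auto
  have "(Ln has_derivative (\<lambda>w. inverse z * w)) (at z)"
    using has_field_derivative_Ln[OF z] by (simp add: has_field_derivative_def)
  then have d: "((\<lambda>w. Im (Ln w)) has_derivative (\<lambda>w. Im (inverse z * w))) (at z)"
    by (rule bounded_linear.has_derivative[OF bounded_linear_Im])
  have "(\<lambda>w. Im (inverse z * w)) = (\<lambda>w. Im (w / z))" by (auto simp: divide_inverse mult.commute)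
  with d have d: "((\<lambda>w. Im (Ln w)) has_derivative (\<lambda>w. Im (w / z))) (at z)" by simp
  have o: "open (- (\<real>\<^sub>\<le>\<^sub>0 :: complex set))" by auto
  show ?thesis
    apply (rule has_derivative_transform_within_open[OF d o])
    using z apply simp
    subgoal for x using nonpos_Reals_zero_I[where 'a=complex] by (metis Arg_eq_Im_Ln Compl_iff)
    done
qed

lemma Arg2pi_deriv: "z \<notin> \<real>\<^sub>\<ge>\<^sub>0 \<Longrightarrow> (Arg2pi has_derivative (\<lambda>w. Im (w / z))) (at z)"
proof -
  assume z: "z \<notin> \<real>\<^sub>\<ge>\<^sub>0"
  then have mz: "- z \<notin> \<real>\<^sub>\<le>\<^sub>0" by (simp add: complex_nonneg_Reals_iff complex_nonpos_Reals_iff)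
  have l: "(Ln has_derivative (*) (inverse (- z))) (at (- z))"
    using has_field_derivative_Ln[OF mz] unfolding has_field_derivative_def .
  have n: "(uminus has_derivative uminus) (at z)" by (auto intro!: derivative_eq_intros)
  have "((\<lambda>w. Ln (- w)) has_derivative (\<lambda>w. inverse (- z) * (- w))) (at z)"
    using has_derivative_compose[OF n l] .
  then have d: "((\<lambda>w. Im (Ln (- w)) + pi) has_derivative (\<lambda>w. Im (inverse (- z) * (- w)) + 0)) (at z)"
    by (intro has_derivative_add has_derivative_const bounded_linear.has_derivative[OF bounded_linear_Im])
  have "(\<lambda>w. Im (inverse (- z) * (- w)) + 0) = (\<lambda>w. Im (w / z))" by (auto simp: divide_inverse mult.commute)
  with d have d: "((\<lambda>w. Im (Ln (- w)) + pi) has_derivative (\<lambda>w. Im (w / z))) (at z)" by simp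
  have o: "open (- (\<real>\<^sub>\<ge>\<^sub>0 :: complex set))" by auto
  have eq: "Arg2pi w = Im (Ln (- w)) + pi" if "w \<notin> \<real>\<^sub>\<ge>\<^sub>0" for w
  proof -
    have "Arg2pi w \<noteq> 0" using that by (auto simp: Arg2pi_eq_0 complex_nonneg_Reals_iff complex_is_Real_iff)
    then have "0 < Arg2pi w" using Arg2pi[of w] by linarith
    then show ?thesis by (rule Arg2pi_Ln)
  qed
  show ?thesis
    apply (rule has_derivative_transform_within_open[OF d o])
    using z eq by auto
qed

lemma Im_div_norm: "z \<noteq> 0 \<Longrightarrow> Im (w / z) * (cmod z)^2 = Re z * Im w - Im z * Re w"
proof -
  assume z: "z \<noteq> 0"
  have nz: "(Re z)^2 + (Im z)^2 \<noteq> 0" using z by (simp add: complex_eq_iff)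
  have "Im (w / z) = (Re z * Im w - Im z * Re w) / ((Re z)^2 + (Im z)^2)" by (simp add: Im_divide)
  then show ?thesis using nz by (simp add: cmod_power2)
qed

lemma inner_i: "(\<i> * z) \<bullet> w = Re z * Im w - Im z * Re w"
  by (simp add: inner_complex_def)

lemma V_deriv:
  fixes \<theta> f f' :: "_ \<Rightarrow> real"
  assumes th: "(\<theta> has_derivative (\<lambda>w. Im (w / z))) (at z)"
    and f: "(f has_real_derivative f' (\<theta> z)) (at (\<theta> z))" and z: "z \<noteq> 0"
  shows "((\<lambda>z. 1/2 * f (\<theta> z) * (cmod z)^2) has_derivative
     (\<lambda>w. (of_real (f (\<theta> z)) * z + of_real (f' (\<theta> z) / 2) * (\<i> * z)) \<bullet> w)) (at z)"
proof -
  have f': "(f has_derivative (\<lambda>h. f' (\<theta> z) * h)) (at (\<theta> z))"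
    using f by (simp add: has_field_derivative_def)
  have c: "((\<lambda>z. f (\<theta> z)) has_derivative (\<lambda>w. f' (\<theta> z) * Im (w / z))) (at z)"
    using has_derivative_compose[OF th f'] .
  have n: "((\<lambda>z::complex. (cmod z)^2) has_derivative (\<lambda>w. 2 * (z \<bullet> w))) (at z)"
  proof -
    have "((\<lambda>z::complex. z \<bullet> z) has_derivative (\<lambda>w. z \<bullet> w + w \<bullet> z)) (at z)"
      by (rule has_derivative_inner[OF has_derivative_ident has_derivative_ident])
    then show ?thesis by (simp add: power2_norm_eq_inner inner_commute)
  qed
  have "((\<lambda>z. 1/2 * f (\<theta> z) * (cmod z)^2) has_derivative
      (\<lambda>w. 1/2 * f (\<theta> z) * (2 * (z \<bullet> w)) + 1/2 * (f' (\<theta> z) * Im (w / z)) * (cmod z)^2)) (at z)"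
    using has_derivative_mult[OF has_derivative_mult_right[OF c, of "1/2"] n] by (simp add: algebra_simps)
  moreover have "(\<lambda>w. 1/2 * f (\<theta> z) * (2 * (z \<bullet> w)) + 1/2 * (f' (\<theta> z) * Im (w / z)) * (cmod z)^2)
     = (\<lambda>w. (of_real (f (\<theta> z)) * z + of_real (f' (\<theta> z) / 2) * (\<i> * z)) \<bullet> w)"
  proof
    fix w
    have "1/2 * f (\<theta> z) * (2 * (z \<bullet> w)) + 1/2 * (f' (\<theta> z) * Im (w / z)) * (cmod z)^2
       = f (\<theta> z) * (z \<bullet> w) + 1/2 * f' (\<theta> z) * (Im (w / z) * (cmod z)^2)" by simp
    also have "\<dots> = f (\<theta> z) * (z \<bullet> w) + 1/2 * f' (\<theta> z) * (Re z * Im w - Im z * Re w)"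
      using Im_div_norm[OF z] by simp
    also have "\<dots> = (of_real (f (\<theta> z)) * z + of_real (f' (\<theta> z) / 2) * (\<i> * z)) \<bullet> w"
      by (simp add: inner_complex_def algebra_simps)
    finally show "1/2 * f (\<theta> z) * (2 * (z \<bullet> w)) + 1/2 * (f' (\<theta> z) * Im (w / z)) * (cmod z)^2
      = (of_real (f (\<theta> z)) * z + of_real (f' (\<theta> z) / 2) * (\<i> * z)) \<bullet> w" .
  qed
  ultimately show ?thesis by simp
qed

lemma GV_deriv:
  fixes \<theta> f g gg :: "_ \<Rightarrow> real"
  assumes th: "(\<theta> has_derivative (\<lambda>w. Im (w / z))) (at z)"
    and f: "(f has_real_derivative g (\<theta> z)) (at (\<theta> z))"
    and g: "(g has_real_derivative gg (\<theta> z)) (at (\<theta> z))"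
  shows "((\<lambda>z. of_real (f (\<theta> z)) * z + of_real (g (\<theta> z) / 2) * (\<i> * z)) has_derivative
     (\<lambda>w. of_real (f (\<theta> z)) * w + of_real (g (\<theta> z) / 2) * (\<i> * w)
        + of_real (Im (w / z)) * (of_real (g (\<theta> z)) * z + of_real (gg (\<theta> z) / 2) * (\<i> * z)))) (at z)"
proof -
  have cf: "((\<lambda>z. complex_of_real (f (\<theta> z))) has_derivative (\<lambda>w. of_real (g (\<theta> z) * Im (w / z)))) (at z)"
    using has_derivative_compose[OF th f[unfolded has_field_derivative_def]]
    by (rule bounded_linear.has_derivative[OF bounded_linear_of_real])
  have cg: "((\<lambda>z. complex_of_real (g (\<theta> z) / 2)) has_derivative (\<lambda>w. of_real (gg (\<theta> z) * Im (w / z) / 2))) (at z)"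
  proof -
    have "((\<lambda>z. g (\<theta> z) / 2) has_derivative (\<lambda>w. gg (\<theta> z) * Im (w / z) / 2)) (at z)"
      using has_derivative_divide'[OF has_derivative_compose[OF th g[unfolded has_field_derivative_def]] has_derivative_const, of 2]
      by simp
    then show ?thesis by (rule bounded_linear.has_derivative[OF bounded_linear_of_real])
  qed
  have iz: "((\<lambda>z. \<i> * z) has_derivative (\<lambda>w. \<i> * w)) (at z)"
    by (rule has_derivative_mult_right[OF has_derivative_ident])
  have "((\<lambda>z. of_real (f (\<theta> z)) * z + of_real (g (\<theta> z) / 2) * (\<i> * z)) has_derivative
     (\<lambda>w. (of_real (f (\<theta> z)) * w + of_real (g (\<theta> z) * Im (w / z)) * z) +
          (of_real (g (\<theta> z) / 2) * (\<i> * w) + of_real (gg (\<theta> z) * Im (w / z) / 2) * (\<i> * z)))) (at z)"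
    by (rule has_derivative_add[OF has_derivative_mult[OF cf has_derivative_ident] has_derivative_mult[OF cg iz]])
  then show ?thesis by (simp add: algebra_simps)
qed

lemma inner_ofreal: "w \<bullet> (complex_of_real c * x) = c * (w \<bullet> x)"
  by (simp add: inner_complex_def algebra_simps)

lemma inner_i_self: "w \<bullet> (\<i> * w) = 0"
  by (simp add: inner_complex_def algebra_simps)

lemma Im_div_inner: "z \<noteq> 0 \<Longrightarrow> Im (w / z) = ((\<i> * z) \<bullet> w) / (cmod z)^2"
  using Im_div_norm[of z w] by (simp add: inner_i field_simps)

lemma inner_sq_sum: "(z \<bullet> w)^2 + ((\<i> * z) \<bullet> w)^2 = (cmod z)^2 * (cmod w)^2"
  unfolding cmod_power2 by (simp add: inner_complex_def power2_eq_square algebra_simps)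

lemma inner_div2: "w \<bullet> (x / 2) = (w \<bullet> x) / (2::real)" for x :: complex
  by (simp add: inner_complex_def)

lemma quad_bound:
  fixes C S g a b :: real
  assumes cs: "C^2 + S^2 = 1" and g: "0 \<le> g" "g \<le> 1"
  shows "\<bar>C * (a^2 + b^2) - 2 * g * S * a * b - 2 * g^2 * C * b^2\<bar> \<le> a^2 + b^2"
proof -
  let ?Q = "C * (a^2 + b^2) - 2 * g * S * a * b - 2 * g^2 * C * b^2"
  have "C^2 \<le> 1" using cs by (metis le_add_same_cancel1 zero_le_power2)
  then have "\<bar>C\<bar> \<le> 1" by (simp add: abs_square_le_1)
  then have C1: "C \<le> 1" "C \<ge> -1" by linarith+
  have g2: "1 - g^2 \<ge> 0" using g by (simp add: power_le_one)
  have id1: "(1 - C) * ((a^2 + b^2) - ?Q) = ((1 - C) * a + g * S * b)^2 + (1 - C)^2 * (1 - g^2) * b^2"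
    using cs by algebra
  have id2: "(1 + C) * ((a^2 + b^2) + ?Q) = ((1 + C) * a - g * S * b)^2 + (1 + C)^2 * (1 - g^2) * b^2"
    using cs by algebra
  have p1: "(a^2 + b^2) - ?Q \<ge> 0"
  proof (cases "C = 1")
    case True
    then have "S = 0" using cs by simp
    then show ?thesis using True g by simp
  next
    case False
    then have "1 - C > 0" using C1 by simp
    moreover have "(1 - C) * ((a^2 + b^2) - ?Q) \<ge> 0" unfolding id1 using g2 by simp
    ultimately show ?thesis by (simp add: zero_le_mult_iff)
  qed
  have p2: "(a^2 + b^2) + ?Q \<ge> 0"
  proof (cases "C = -1")
    case True
    then have "S = 0" using cs by simp
    then show ?thesis using True g by simp
  next
    case False
    then have "1 + C > 0" using C1 by simp
    moreover have "(1 + C) * ((a^2 + b^2) + ?Q) \<ge> 0" unfolding id2 using g2 by simp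
    ultimately show ?thesis by (simp add: zero_le_mult_iff)
  qed
  show ?thesis using p1 p2 by linarith
qed

context Prof
begin

definition "U z = 1/2 * f2 (Arg2pi z) * (cmod z)^2"
definition "GU z = of_real (f2 (Arg2pi z)) * z + of_real (f2' (Arg2pi z) / 2) * (\<i> * z)"
definition "HU z w = of_real (f2 (Arg2pi z)) * w + of_real (f2' (Arg2pi z) / 2) * (\<i> * w)
        + of_real (Im (w / z)) * (of_real (f2' (Arg2pi z)) * z + of_real (f2'' (Arg2pi z) / 2) * (\<i> * z))"

lemma f2_bound: "\<bar>f2 t\<bar> \<le> 1" by (simp add: f2_def abs_cos_le_one)

lemma f2'_bound: "\<bar>f2' t\<bar> \<le> 2 * al"
proof -
  have "\<bar>sin x\<bar> \<le> 1" for x :: real by (rule abs_sin_le_one)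
  then have "\<bar>2 * al * sin x\<bar> \<le> 2 * al" "\<bar>2 * be * sin x\<bar> \<le> 2 * al" for x
    using al_pos be_pos be_lt al_gt
    by (auto simp: abs_mult intro!: mult_le_one order_trans[OF mult_right_le_one_le])
  then show ?thesis by (auto simp: f2'_def)
qed

lemma f2''_bound: "\<bar>f2'' t\<bar> \<le> 4 * al\<^sup>2"
proof -
  have c: "\<bar>cos x\<bar> \<le> 1" for x :: real by (rule abs_cos_le_one)
  have "be\<^sup>2 \<le> al\<^sup>2" using be_pos be_lt al_gt by (intro power_mono) auto
  then have "\<bar>4 * al\<^sup>2 * cos x\<bar> \<le> 4 * al\<^sup>2" "\<bar>4 * be\<^sup>2 * cos x\<bar> \<le> 4 * al\<^sup>2" for x
    using c[of x] by (auto simp: abs_mult intro: order_trans[OF mult_left_le])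
  then show ?thesis by (auto simp: f2''_def)
qed

lemma chart1_eq:
  assumes z: "z \<in> \<real>\<^sub>\<ge>\<^sub>0" "z \<noteq> 0"
  shows "\<forall>\<^sub>F w in nhds z. w \<notin> \<real>\<^sub>\<le>\<^sub>0 \<and> f1 (Arg w) = f2 (Arg2pi w) \<and> f1' (Arg w) = f2' (Arg2pi w)"
proof -
  have zn: "z \<notin> \<real>\<^sub>\<le>\<^sub>0" using z by (auto simp: complex_nonneg_Reals_iff complex_nonpos_Reals_iff complex_eq_iff)
  have a0: "Arg z = 0" using z by (auto simp: Arg_eq_0 complex_nonneg_Reals_iff complex_is_Real_iff)
  have "isCont Arg z" using continuous_at_Arg[OF zn] .
  then have "(Arg \<longlongrightarrow> Arg z) (nhds z)" by (simp add: isCont_def tendsto_at_iff_tendsto_nhds)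
  then have e1: "\<forall>\<^sub>F w in nhds z. Arg w < A" using a0 A_pos by (auto dest: order_tendstoD)
  have e2: "\<forall>\<^sub>F w in nhds z. w \<notin> \<real>\<^sub>\<le>\<^sub>0"
    using eventually_nhds_in_open[of "- \<real>\<^sub>\<le>\<^sub>0" z] zn closed_nonpos_Reals_complex by (auto simp: open_Compl)
  show ?thesis using e1 e2
  proof eventually_elim
    case (elim w)
    then have w0: "w \<noteq> 0" by auto
    show ?case
    proof (cases "Im w \<ge> 0")
      case True
      then have "Arg w = Arg2pi w" by (rule Arg_Arg2pi_upper)
      moreover have "0 \<le> Arg w" using True by (simp add: Arg_less_0)
      ultimately show ?thesis using elim f1_eq_f2 by auto
    next
      case False
      then have e: "Arg2pi w = Arg w + 2 * pi" by (intro Arg_Arg2pi_lower) auto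
      have "Arg w < 0" using False by (simp add: Arg_neg_iff)
      then show ?thesis using elim e f1_eq_f2_shift mpi_less_Arg[of w] by auto
    qed
  qed
qed

lemma U_deriv: "(U has_derivative (\<lambda>w. GU z \<bullet> w)) (at z)"
proof -
  consider "z \<notin> \<real>\<^sub>\<ge>\<^sub>0" | "z \<in> \<real>\<^sub>\<ge>\<^sub>0" "z \<noteq> 0" | "z = 0" by blast
  then show ?thesis
  proof cases
    case 1
    then have z0: "z \<noteq> 0" by auto
    show ?thesis unfolding U_def[abs_def] GU_def
      by (rule V_deriv[where f'=f2', OF Arg2pi_deriv[OF 1] f2_deriv[of "Arg2pi z"] z0])
  next
    case 2
    have zn: "z \<notin> \<real>\<^sub>\<le>\<^sub>0" using 2 by (auto simp: complex_nonneg_Reals_iff complex_nonpos_Reals_iff complex_eq_iff)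
    have a0: "Arg z = 0" "Arg2pi z = 0" using 2 by (auto simp: Arg_eq_0 Arg2pi_eq_0 complex_nonneg_Reals_iff complex_is_Real_iff)
    have d: "((\<lambda>z. 1/2 * f1 (Arg z) * (cmod z)^2) has_derivative
       (\<lambda>w. (of_real (f1 (Arg z)) * z + of_real (f1' (Arg z) / 2) * (\<i> * z)) \<bullet> w)) (at z)"
      by (rule V_deriv[where f'=f1', OF Arg_deriv[OF zn] f1_deriv[of "Arg z"] 2(2)])
    have g: "of_real (f1 (Arg z)) * z + of_real (f1' (Arg z) / 2) * (\<i> * z) = GU z"
      unfolding GU_def a0 using f1_eq_f2[of 0] A_pos by simp
    obtain S where S: "open S" "z \<in> S" "\<And>w. w \<in> S \<Longrightarrow> w \<notin> \<real>\<^sub>\<le>\<^sub>0 \<and> f1 (Arg w) = f2 (Arg2pi w) \<and> f1' (Arg w) = f2' (Arg2pi w)"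
      using chart1_eq[OF 2] unfolding eventually_nhds by blast
    show ?thesis
      apply (rule has_derivative_transform_within_open[OF d[unfolded g] S(1,2)])
      using S(3) by (simp add: U_def)
  next
    case 3
    have "(U has_derivative (\<lambda>w. 0)) (at 0)"
      unfolding has_derivative_at
    proof
      show "bounded_linear (\<lambda>w::complex. 0::real)" by simp
      have "((\<lambda>h. norm (U (0 + h) - U 0 - 0) / norm h) \<longlongrightarrow> 0) (at (0::complex))"
      proof (rule Lim_null_comparison)
        show "\<forall>\<^sub>F h in at 0. norm (norm (U (0 + h) - U 0 - 0) / norm h) \<le> 1/2 * norm h"
        proof (rule always_eventually, intro allI)
          fix h :: complex
          have "\<bar>U h\<bar> \<le> 1/2 * (cmod h)^2"
            unfolding U_def using f2_bound[of "Arg2pi h"]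
            by (auto simp: abs_mult intro!: mult_left_le_one_le)
          then show "norm (norm (U (0 + h) - U 0 - 0) / norm h) \<le> 1/2 * norm h"
            by (cases "h = 0") (auto simp: U_def divide_le_eq power2_eq_square)
        qed
        show "((\<lambda>h::complex. 1/2 * norm h) \<longlongrightarrow> 0) (at 0)"
          by (auto intro!: tendsto_eq_intros)
      qed
      then show "(\<lambda>h. norm (U (0 + h) - U 0 - 0) / norm h) \<midarrow>0\<rightarrow> 0" by simp
    qed
    then show ?thesis using 3 by (simp add: GU_def)
  qed
qed

lemma GU_cont: "isCont GU z"
proof -
  consider "z \<notin> \<real>\<^sub>\<ge>\<^sub>0" | "z \<in> \<real>\<^sub>\<ge>\<^sub>0" "z \<noteq> 0" | "z = 0" by blast
  then show ?thesis
  proof cases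
    case 1
    have a: "isCont Arg2pi z" using continuous_at_Arg2pi[OF 1] .
    have c1: "isCont (\<lambda>z. f2 (Arg2pi z)) z" using isCont_o2[OF a f2_cont] .
    have c2: "isCont (\<lambda>z. f2' (Arg2pi z)) z" using isCont_o2[OF a f2'_cont] .
    show ?thesis unfolding GU_def[abs_def] using c1 c2 by (intro continuous_intros) auto
  next
    case 2
    have zn: "z \<notin> \<real>\<^sub>\<le>\<^sub>0" using 2 by (auto simp: complex_nonneg_Reals_iff complex_nonpos_Reals_iff complex_eq_iff)
    have a: "isCont Arg z" using continuous_at_Arg[OF zn] .
    have c1: "isCont (\<lambda>z. f1 (Arg z)) z" using isCont_o2[OF a f1_cont] .
    have c2: "isCont (\<lambda>z. f1' (Arg z)) z" using isCont_o2[OF a f1'_cont] .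
    have c: "isCont (\<lambda>w. of_real (f1 (Arg w)) * w + of_real (f1' (Arg w) / 2) * (\<i> * w)) z"
      using c1 c2 by (intro continuous_intros) auto
    have ev: "\<forall>\<^sub>F w in nhds z. of_real (f1 (Arg w)) * w + of_real (f1' (Arg w) / 2) * (\<i> * w) = GU w"
      using chart1_eq[OF 2] by eventually_elim (simp add: GU_def)
    show ?thesis using isCont_cong[OF ev] c by blast
  next
    case 3
    have g0: "GU 0 = 0" by (simp add: GU_def)
    have b: "cmod (GU w) \<le> (1 + al) * cmod w" for w
    proof -
      have "cmod (GU w) \<le> \<bar>f2 (Arg2pi w)\<bar> * cmod w + \<bar>f2' (Arg2pi w) / 2\<bar> * cmod w"
        unfolding GU_def using norm_triangle_ineq[of "of_real (f2 (Arg2pi w)) * w" "of_real (f2' (Arg2pi w) / 2) * (\<i> * w)"]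
        by (simp add: norm_mult)
      also have "\<dots> \<le> 1 * cmod w + al * cmod w"
        using f2_bound[of "Arg2pi w"] f2'_bound[of "Arg2pi w"]
        by (intro add_mono mult_right_mono) auto
      finally show ?thesis by (simp add: algebra_simps)
    qed
    have "(GU \<longlongrightarrow> 0) (at 0)"
    proof (rule Lim_null_comparison)
      show "\<forall>\<^sub>F w in at 0. norm (GU w) \<le> (1 + al) * cmod w" using b by simp
      show "((\<lambda>w. (1 + al) * cmod w) \<longlongrightarrow> 0) (at 0)" by (auto intro!: tendsto_eq_intros)
    qed
    then show ?thesis using 3 g0 by (simp add: isCont_def)
  qed
qed

lemma GU_deriv: "z \<notin> \<real>\<^sub>\<ge>\<^sub>0 \<Longrightarrow> Arg2pi z \<noteq> A \<Longrightarrow> (GU has_derivative HU z) (at z)"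
  unfolding GU_def[abs_def] HU_def[abs_def]
  by (rule GV_deriv[where g=f2' and gg=f2'', OF Arg2pi_deriv f2_deriv[of "Arg2pi z"] f2'_deriv[of "Arg2pi z"]])

lemma HU_cont: "z \<notin> \<real>\<^sub>\<ge>\<^sub>0 \<Longrightarrow> Arg2pi z \<noteq> A \<Longrightarrow> isCont (\<lambda>z. HU z w) z"
proof -
  assume z: "z \<notin> \<real>\<^sub>\<ge>\<^sub>0" and zA: "Arg2pi z \<noteq> A"
  then have z0: "z \<noteq> 0" by auto
  have a: "isCont Arg2pi z" using continuous_at_Arg2pi[OF z] .
  have c1: "isCont (\<lambda>z. f2 (Arg2pi z)) z" using isCont_o2[OF a f2_cont] .
  have c2: "isCont (\<lambda>z. f2' (Arg2pi z)) z" using isCont_o2[OF a f2'_cont] .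
  have c3: "isCont (\<lambda>z. f2'' (Arg2pi z)) z" using isCont_o2[OF a f2''_cont[OF zA]] .
  show ?thesis unfolding HU_def using c1 c2 c3 z0 by (intro continuous_intros) auto
qed

lemma Im_scale_div: "Im (of_real r * b / z) = r * Im (b / z)" "Im (b * of_real r / z) = r * Im (b / z)"
  by (simp_all add: Im_divide algebra_simps diff_divide_distrib)

lemma HU_linear: "linear (HU z)"
proof (rule linearI)
  show "HU z (b1 + b2) = HU z b1 + HU z b2" for b1 b2
    by (simp add: HU_def algebra_simps add_divide_distrib)
  show "HU z (r *\<^sub>R b) = r *\<^sub>R HU z b" for r b
    by (simp add: HU_def algebra_simps scaleR_conv_of_real Im_scale_div)
qed

lemma HU_bound: "cmod (HU z w) \<le> (1 + 3 * al + 2 * al\<^sup>2) * cmod w"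
proof (cases "z = 0")
  case True
  have "cmod (HU z w) \<le> \<bar>f2 (Arg2pi z)\<bar> * cmod w + \<bar>f2' (Arg2pi z) / 2\<bar> * cmod w"
    unfolding HU_def using True norm_triangle_ineq[of "of_real (f2 (Arg2pi z)) * w" "of_real (f2' (Arg2pi z) / 2) * (\<i> * w)"]
    by (simp add: norm_mult)
  also have "\<dots> \<le> 1 * cmod w + al * cmod w"
    using f2_bound[of "Arg2pi z"] f2'_bound[of "Arg2pi z"] by (intro add_mono mult_right_mono) auto
  also have "\<dots> = (1 + al) * cmod w" by (simp add: algebra_simps)
  also have "\<dots> \<le> (1 + 3 * al + 2 * al\<^sup>2) * cmod w" using al_pos by (intro mult_right_mono) auto
  finally show ?thesis .
next
  case False
  let ?t = "Arg2pi z"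
  have im: "\<bar>Im (w / z)\<bar> \<le> cmod w / cmod z"
    using abs_Im_le_cmod[of "w / z"] by (simp add: norm_divide)
  have t1: "cmod (of_real (f2 ?t) * w) \<le> 1 * cmod w"
    using mult_right_mono[OF f2_bound[of ?t] norm_ge_zero[of w]] by (simp add: norm_mult)
  have t2: "cmod (of_real (f2' ?t / 2) * (\<i> * w)) \<le> al * cmod w"
  proof -
    have "\<bar>f2' ?t / 2\<bar> \<le> al" using f2'_bound[of ?t] by simp
    then show ?thesis using mult_right_mono[of "\<bar>f2' ?t / 2\<bar>" al "cmod w"] by (simp add: norm_mult)
  qed
  have t3a: "cmod (of_real (f2' ?t) * z + of_real (f2'' ?t / 2) * (\<i> * z)) \<le> (2 * al + 2 * al\<^sup>2) * cmod z"
  proof -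
    have "cmod (of_real (f2' ?t) * z + of_real (f2'' ?t / 2) * (\<i> * z)) \<le> \<bar>f2' ?t\<bar> * cmod z + \<bar>f2'' ?t / 2\<bar> * cmod z"
      using norm_triangle_ineq[of "of_real (f2' ?t) * z" "of_real (f2'' ?t / 2) * (\<i> * z)"] by (simp add: norm_mult)
    also have "\<dots> \<le> (2 * al) * cmod z + (2 * al\<^sup>2) * cmod z"
      using f2'_bound[of ?t] f2''_bound[of ?t] by (intro add_mono mult_right_mono) auto
    finally show ?thesis by (simp add: algebra_simps)
  qed
  have t3: "cmod (of_real (Im (w / z)) * (of_real (f2' ?t) * z + of_real (f2'' ?t / 2) * (\<i> * z))) \<le> (2 * al + 2 * al\<^sup>2) * cmod w"
  proof -
    have "cmod (of_real (Im (w / z)) * (of_real (f2' ?t) * z + of_real (f2'' ?t / 2) * (\<i> * z)))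
        \<le> (cmod w / cmod z) * ((2 * al + 2 * al\<^sup>2) * cmod z)"
      unfolding norm_mult using im t3a by (intro mult_mono) auto
    also have "\<dots> = (2 * al + 2 * al\<^sup>2) * cmod w" using False by simp
    finally show ?thesis .
  qed
  have "cmod (HU z w) \<le> 1 * cmod w + al * cmod w + (2 * al + 2 * al\<^sup>2) * cmod w"
    unfolding HU_def using t1 t2 t3 norm_triangle_le[OF add_mono[OF norm_triangle_le[OF add_mono[OF t1 t2]] t3]]
    by (smt (verit) norm_triangle_ineq)
  then show ?thesis by (simp add: algebra_simps)
qed

lemma HU_quad:
  assumes z: "z \<noteq> 0"
  shows "w \<bullet> HU z w = f2 (Arg2pi z) * (cmod w)^2
     + f2' (Arg2pi z) * (z \<bullet> w) * ((\<i> * z) \<bullet> w) / (cmod z)^2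
     + f2'' (Arg2pi z) / 2 * ((\<i> * z) \<bullet> w)^2 / (cmod z)^2"
proof -
  let ?t = "Arg2pi z"
  have "w \<bullet> HU z w = f2 ?t * (w \<bullet> w) + f2' ?t / 2 * (w \<bullet> (\<i> * w))
     + Im (w / z) * (f2' ?t * (w \<bullet> z) + f2'' ?t / 2 * (w \<bullet> (\<i> * z)))"
    unfolding HU_def by (simp add: inner_add_right inner_ofreal inner_div2)
  also have "\<dots> = f2 ?t * (cmod w)^2 + ((\<i> * z) \<bullet> w) / (cmod z)^2 * (f2' ?t * (z \<bullet> w) + f2'' ?t / 2 * ((\<i> * z) \<bullet> w))"
    by (simp add: inner_i_self Im_div_inner[OF z] power2_norm_eq_inner inner_commute)
  also have "\<dots> = f2 ?t * (cmod w)^2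
     + f2' ?t * (z \<bullet> w) * ((\<i> * z) \<bullet> w) / (cmod z)^2
     + f2'' ?t / 2 * ((\<i> * z) \<bullet> w)^2 / (cmod z)^2"
    using z by (simp add: field_simps power2_eq_square)
  finally show ?thesis .
qed

lemma HU_form_bound:
  assumes al1: "al \<le> 1" and z: "z \<noteq> 0"
  shows "\<bar>w \<bullet> HU z w\<bar> \<le> (cmod w)^2"
proof -
  let ?t = "Arg2pi z"
  define a where "a = (z \<bullet> w) / cmod z"
  define b where "b = ((\<i> * z) \<bullet> w) / cmod z"
  have nz: "cmod z > 0" using z by simp
  have ab: "a^2 + b^2 = (cmod w)^2"
    using inner_sq_sum[of z w] nz by (simp add: a_def b_def power_divide add_divide_distrib[symmetric])
  have q: "w \<bullet> HU z w = f2 ?t * (a^2 + b^2) + f2' ?t * a * b + f2'' ?t / 2 * b^2"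
    unfolding HU_quad[OF z] ab using nz by (simp add: a_def b_def power_divide power2_eq_square)
  show ?thesis
  proof (cases "?t < A")
    case True
    let ?C = "cos (2 * al * ?t)" and ?S = "sin (2 * al * ?t)"
    have "w \<bullet> HU z w = ?C * (a^2 + b^2) - 2 * al * ?S * a * b - 2 * al^2 * ?C * b^2"
      unfolding q using True by (simp add: f2_def f2'_def f2''_def)
    then show ?thesis using quad_bound[of ?C ?S al a b] al1 al_pos ab by simp
  next
    case False
    let ?C = "cos (2 * be * (2 * pi - ?t))" and ?S = "- sin (2 * be * (2 * pi - ?t))"
    have "w \<bullet> HU z w = ?C * (a^2 + b^2) - 2 * be * ?S * a * b - 2 * be^2 * ?C * b^2"
      unfolding q using False by (simp add: f2_def f2'_def f2''_def)
    then show ?thesis using quad_bound[of ?C ?S be a b] be_pos be_lt ab by simp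
  qed
qed

lemma viol:
  assumes al1: "al > 1"
  defines "z \<equiv> cis (A / 2)"
  shows "z \<notin> \<real>\<^sub>\<ge>\<^sub>0" "Arg2pi z \<noteq> A" "((1 - \<i>) * z) \<bullet> HU z ((1 - \<i>) * z) > (cmod ((1 - \<i>) * z))^2"
proof -
  have A2: "0 < A / 2" "A / 2 < pi" using A_pos A_lt_pi by auto
  have arg: "Arg2pi z = A / 2"
    unfolding z_def by (rule Arg2pi_unique[of 1]) (use A2 in \<open>auto simp: cis_conv_exp\<close>)
  have im: "Im z > 0" unfolding z_def using A2 by (simp add: sin_gt_zero)
  show "z \<notin> \<real>\<^sub>\<ge>\<^sub>0" using im by (auto simp: complex_nonneg_Reals_iff)
  show "Arg2pi z \<noteq> A" using arg A_pos by simp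
  have z0: "z \<noteq> 0" using im by auto
  have aA: "al * A = pi / 2" using al_A by simp
  have v: "f2 (A / 2) = 0" "f2' (A / 2) = - 2 * al" "f2'' (A / 2) = 0"
    using A_pos by (auto simp: f2_def f2'_def f2''_def aA)
  let ?c = "cos (A / 2)" and ?s = "sin (A / 2)"
  have cs: "?c^2 + ?s^2 = 1" by simp
  have nz: "cmod z = 1" unfolding z_def by simp
  have i1: "z \<bullet> ((1 - \<i>) * z) = 1" unfolding z_def using cs
    by (simp add: inner_complex_def cis.sel algebra_simps power2_eq_square)
  have i2: "(\<i> * z) \<bullet> ((1 - \<i>) * z) = - 1" unfolding z_def using cs
    by (simp add: inner_complex_def cis.sel algebra_simps power2_eq_square)
  have nw: "(cmod ((1 - \<i>) * z))^2 = 2" unfolding z_def cmod_power2 using cs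
    by (simp add: cis.sel algebra_simps power2_eq_square)
  have "((1 - \<i>) * z) \<bullet> HU z ((1 - \<i>) * z) = 2 * al"
    unfolding HU_quad[OF z0] arg v i1 i2 nz nw by simp
  then show "((1 - \<i>) * z) \<bullet> HU z ((1 - \<i>) * z) > (cmod ((1 - \<i>) * z))^2" using nw al1 by simp
qed

lemma q_formula: "\<i> \<bullet> HU (Complex 1 t) \<i> = f2 (Arg2pi (Complex 1 t)) + f2' (Arg2pi (Complex 1 t)) * t / (1 + t^2)
     + f2'' (Arg2pi (Complex 1 t)) / 2 / (1 + t^2)"
proof -
  have z0: "Complex 1 t \<noteq> 0" by (simp add: complex_eq_iff)
  have n: "(cmod (Complex 1 t))^2 = 1 + t^2" by (simp add: cmod_power2)
  show ?thesis unfolding HU_quad[OF z0] n by (simp add: inner_complex_def)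
qed

lemma arg_right: "((\<lambda>t. Arg2pi (Complex 1 t)) \<longlongrightarrow> 0) (at_right 0)"
proof -
  have c: "((\<lambda>t. Complex 1 t) \<longlongrightarrow> Complex 1 0) (at_right 0)"
    by (intro tendsto_intros)
  have i: "isCont Arg (Complex 1 0)" by (rule continuous_at_Arg) (simp add: complex_nonpos_Reals_iff)
  have "((\<lambda>t. Arg (Complex 1 t)) \<longlongrightarrow> Arg (Complex 1 0)) (at_right 0)"
    using isCont_tendsto_compose[OF i c] .
  moreover have "Arg (Complex 1 0) = 0" by (simp add: Arg_eq_0 complex_is_Real_iff)
  moreover have "\<forall>\<^sub>F t in at_right 0. Arg (Complex 1 t) = Arg2pi (Complex 1 t)"
    unfolding eventually_at_right_field by (intro exI[of _ 1]) (auto intro!: Arg_Arg2pi_upper)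
  ultimately show ?thesis by (auto intro: Lim_transform_eventually)
qed

lemma arg_left: "((\<lambda>t. Arg2pi (Complex 1 t)) \<longlongrightarrow> 2 * pi) (at_left 0)"
proof -
  have c: "((\<lambda>t. Complex 1 t) \<longlongrightarrow> Complex 1 0) (at_left 0)"
    by (intro tendsto_intros)
  have i: "isCont Arg (Complex 1 0)" by (rule continuous_at_Arg) (simp add: complex_nonpos_Reals_iff)
  have "((\<lambda>t. Arg (Complex 1 t) + 2 * pi) \<longlongrightarrow> Arg (Complex 1 0) + 2 * pi) (at_left 0)"
    using isCont_tendsto_compose[OF i c] by (intro tendsto_add tendsto_const)
  moreover have "Arg (Complex 1 0) = 0" by (simp add: Arg_eq_0 complex_is_Real_iff)
  moreover have "\<forall>\<^sub>F t in at_left 0. Arg (Complex 1 t) + 2 * pi = Arg2pi (Complex 1 t)"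
    unfolding eventually_at_left_field by (intro exI[of _ "-1"]) (auto intro!: Arg_Arg2pi_lower[symmetric])
  ultimately show ?thesis by (auto intro: Lim_transform_eventually)
qed

lemma q_right: "((\<lambda>t. \<i> \<bullet> HU (Complex 1 t) \<i>) \<longlongrightarrow> 1 - 2 * al\<^sup>2) (at_right 0)"
proof -
  let ?th = "\<lambda>t. Arg2pi (Complex 1 t)"
  have 1: "((\<lambda>t. f2 (?th t)) \<longlongrightarrow> f2 0) (at_right 0)" by (rule isCont_tendsto_compose[OF f2_cont arg_right])
  have 2: "((\<lambda>t. f2' (?th t)) \<longlongrightarrow> f2' 0) (at_right 0)" by (rule isCont_tendsto_compose[OF f2'_cont arg_right])
  have 3: "((\<lambda>t. f2'' (?th t)) \<longlongrightarrow> f2'' 0) (at_right 0)"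
    using A_pos by (intro isCont_tendsto_compose[OF f2''_cont arg_right]) auto
  have v: "f2 0 = 1" "f2' 0 = 0" "f2'' 0 = - 4 * al\<^sup>2" using A_pos by (auto simp: f2_def f2'_def f2''_def)
  have t: "((\<lambda>t::real. t) \<longlongrightarrow> 0) (at_right 0)" by (rule tendsto_ident_at)
  have "((\<lambda>t. f2 (?th t) + f2' (?th t) * t / (1 + t^2) + f2'' (?th t) / 2 / (1 + t^2)) \<longlongrightarrow>
      f2 0 + f2' 0 * 0 / (1 + 0^2) + f2'' 0 / 2 / (1 + 0^2)) (at_right 0)"
    by (intro tendsto_intros 1 2 3 t) auto
  then show ?thesis unfolding q_formula v by simp
qed

lemma q_left: "((\<lambda>t. \<i> \<bullet> HU (Complex 1 t) \<i>) \<longlongrightarrow> 1 - 2 * be\<^sup>2) (at_left 0)"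
proof -
  let ?th = "\<lambda>t. Arg2pi (Complex 1 t)"
  have nA: "2 * pi \<noteq> A" using A_lt_pi pi_gt_zero by linarith
  have 1: "((\<lambda>t. f2 (?th t)) \<longlongrightarrow> f2 (2 * pi)) (at_left 0)" by (rule isCont_tendsto_compose[OF f2_cont arg_left])
  have 2: "((\<lambda>t. f2' (?th t)) \<longlongrightarrow> f2' (2 * pi)) (at_left 0)" by (rule isCont_tendsto_compose[OF f2'_cont arg_left])
  have 3: "((\<lambda>t. f2'' (?th t)) \<longlongrightarrow> f2'' (2 * pi)) (at_left 0)"
    by (rule isCont_tendsto_compose[OF f2''_cont[OF nA] arg_left])
  have nA': "\<not> 2 * pi < A" using A_lt_pi pi_gt_zero by linarith
  have v: "f2 (2 * pi) = 1" "f2' (2 * pi) = 0" "f2'' (2 * pi) = - 4 * be\<^sup>2" using nA' by (auto simp: f2_def f2'_def f2''_def)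
  have t: "((\<lambda>t::real. t) \<longlongrightarrow> 0) (at_left 0)" by (rule tendsto_ident_at)
  have "((\<lambda>t. f2 (?th t) + f2' (?th t) * t / (1 + t^2) + f2'' (?th t) / 2 / (1 + t^2)) \<longlongrightarrow>
      f2 (2 * pi) + f2' (2 * pi) * 0 / (1 + 0^2) + f2'' (2 * pi) / 2 / (1 + 0^2)) (at_left 0)"
    by (intro tendsto_intros 1 2 3 t) auto
  then show ?thesis unfolding q_formula v by simp
qed

lemma off_right: "\<forall>\<^sub>F t in at_right 0. Complex 1 t \<notin> \<real>\<^sub>\<ge>\<^sub>0 \<and> Arg2pi (Complex 1 t) \<noteq> A"
proof -
  have "\<forall>\<^sub>F t in at_right 0. Arg2pi (Complex 1 t) < A" using arg_right A_pos by (auto dest: order_tendstoD)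
  moreover have "\<forall>\<^sub>F t in at_right (0::real). t > 0" by (simp add: eventually_at_right_less)
  ultimately show ?thesis by eventually_elim (auto simp: complex_nonneg_Reals_iff)
qed

lemma off_left: "\<forall>\<^sub>F t in at_left 0. Complex 1 t \<notin> \<real>\<^sub>\<ge>\<^sub>0 \<and> Arg2pi (Complex 1 t) \<noteq> A"
proof -
  have "\<forall>\<^sub>F t in at_left (0::real). t < 0" unfolding eventually_at_left_field by (intro exI[of _ "-1"]) auto
  then show ?thesis
  proof eventually_elim
    case (elim t)
    then have "Arg2pi (Complex 1 t) = Arg (Complex 1 t) + 2 * pi" by (intro Arg_Arg2pi_lower) auto
    then have "Arg2pi (Complex 1 t) > pi" using mpi_less_Arg[of "Complex 1 t"] by linarith
    then show ?case using elim A_lt_pi by (auto simp: complex_nonneg_Reals_iff)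
  qed
qed

end


lemma inner2: "(x::real^2) \<bullet> y = x$1 * y$1 + x$2 * y$2"
  by (simp add: inner_vec_def sum_2)

lemma perp2_comp [simp]: "perp2 v $ 1 = - (v $ 2)" "perp2 v $ 2 = v $ 1"
  by (simp_all add: perp2_def)

lemma norm2_sq: "(norm (x::real^2))^2 = (x$1)^2 + (x$2)^2"
  unfolding power2_norm_eq_inner inner2 by (simp add: power2_eq_square)

locale Tr = Prof +
  fixes z0 e :: "real^2" and s :: real
  assumes e0: "e \<noteq> 0" and s1: "s = 1 \<or> s = -1"
begin

definition Lam :: "real^2 \<Rightarrow> complex" where "Lam p = Complex (p \<bullet> e) (s * (p \<bullet> perp2 e))"
definition LamT :: "complex \<Rightarrow> real^2" where "LamT w = Re w *\<^sub>R e + (s * Im w) *\<^sub>R perp2 e"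
definition "k = norm e"

lemma ss: "s * s = 1" using s1 by auto
lemma k_pos: "k > 0" using e0 by (simp add: k_def)

lemma Lam_linear: "linear Lam"
  by (rule linearI) (simp_all add: Lam_def complex_eq_iff inner_add_left algebra_simps)

lemma Lam_bl: "bounded_linear Lam" using Lam_linear linear_conv_bounded_linear by blast

lemma LamT_linear: "linear LamT"
  by (rule linearI) (simp_all add: LamT_def algebra_simps scaleR_add_left)

lemma LamT_bl: "bounded_linear LamT" using LamT_linear linear_conv_bounded_linear by blast

lemma Lam_norm2: "(cmod (Lam p))^2 = k^2 * (norm p)^2"
proof -
  have "(cmod (Lam p))^2 = (p \<bullet> e)^2 + (s * (p \<bullet> perp2 e))^2" by (simp add: Lam_def cmod_power2)
  also have "\<dots> = (p \<bullet> e)^2 + (p \<bullet> perp2 e)^2" using ss by (simp add: power2_eq_square algebra_simps)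
  also have "\<dots> = k^2 * (norm p)^2"
    unfolding k_def norm2_sq inner2 by (simp add: power2_eq_square algebra_simps)
  finally show ?thesis .
qed

lemma Lam_norm: "cmod (Lam p) = k * norm p"
  using Lam_norm2[of p] k_pos by (metis norm_ge_zero power2_eq_imp_eq power_mult_distrib zero_le_mult_iff less_imp_le)

lemma Lam_adj: "Lam v \<bullet> w = v \<bullet> LamT w"
  by (simp add: Lam_def LamT_def inner_complex_def inner_add_right algebra_simps)

lemma Lam_LamT: "Lam (LamT w) = of_real (k^2) * w"
proof -
  have "LamT w \<bullet> e = Re w * k^2" "LamT w \<bullet> perp2 e = s * Im w * k^2"
    unfolding LamT_def k_def power2_norm_eq_inner by (simp_all add: inner_add_left inner2 algebra_simps)
  then show ?thesis using ss by (simp add: Lam_def complex_eq_iff algebra_simps)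
qed

lemma LamT_norm: "norm (LamT w) = k * cmod w"
proof -
  have "(norm (LamT w))^2 = Lam (LamT w) \<bullet> w" by (simp add: Lam_adj power2_norm_eq_inner)
  also have "\<dots> = k^2 * (cmod w)^2" by (simp add: Lam_LamT inner_ofreal[symmetric] power2_norm_eq_inner inner_commute)
  finally have "(norm (LamT w))^2 = (k * cmod w)^2" by (simp add: power_mult_distrib)
  then show ?thesis using k_pos by (simp add: power2_eq_imp_eq)
qed

definition "uu x = U (Lam (x - z0)) / k^2"
definition "Gu x = (1 / k^2) *\<^sub>R LamT (GU (Lam (x - z0)))"
definition "Nset = {x. Im (Lam (x - z0)) = 0} \<union> {x. Im (cnj (cis A) * Lam (x - z0)) = 0}"
definition "HF x v = (1 / k^2) *\<^sub>R LamT (HU (Lam (x - z0)) (Lam v))"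
definition "Hm x = (if x \<in> Nset then 0 else matrix (HF x))"

lemma aff_deriv: "((\<lambda>x. Lam (x - z0)) has_derivative Lam) (at x)"
proof -
  have "((\<lambda>x. x - z0) has_derivative (\<lambda>v. v - 0)) (at x)"
    by (intro has_derivative_diff has_derivative_ident has_derivative_const)
  then have "((\<lambda>x. x - z0) has_derivative (\<lambda>v. v)) (at x)" by simp
  then show ?thesis by (rule bounded_linear.has_derivative[OF Lam_bl])
qed

lemma aff_cont: "isCont (\<lambda>x. Lam (x - z0)) x"
  using aff_deriv has_derivative_continuous by blast

lemma uu_deriv: "(uu has_derivative (\<lambda>v. Gu x \<bullet> v)) (at x)"
proof -
  have "((\<lambda>x. U (Lam (x - z0))) has_derivative (\<lambda>v. GU (Lam (x - z0)) \<bullet> Lam v)) (at x)"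
    using has_derivative_compose[OF aff_deriv U_deriv] .
  then have "((\<lambda>x. (1 / k^2) * U (Lam (x - z0))) has_derivative (\<lambda>v. (1 / k^2) * (GU (Lam (x - z0)) \<bullet> Lam v))) (at x)"
    by (rule has_derivative_mult_right)
  moreover have "(\<lambda>v. (1 / k^2) * (GU (Lam (x - z0)) \<bullet> Lam v)) = (\<lambda>v. Gu x \<bullet> v)"
    by (auto simp: Gu_def inner_commute Lam_adj)
  ultimately show ?thesis unfolding uu_def[abs_def] by simp
qed

lemma Gu_cont: "continuous_on UNIV Gu"
proof -
  have "isCont Gu x" for x
  proof -
    have "isCont (\<lambda>x. GU (Lam (x - z0))) x" using isCont_o2[OF aff_cont GU_cont] .
    then have "isCont (\<lambda>x. LamT (GU (Lam (x - z0)))) x"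
      using isCont_o2 linear_continuous_at[OF LamT_bl] by blast
    then show ?thesis unfolding Gu_def[abs_def] by (intro continuous_intros)
  qed
  then show ?thesis by (simp add: continuous_at_imp_continuous_on)
qed

lemma notN: "x \<notin> Nset \<Longrightarrow> Lam (x - z0) \<notin> \<real>\<^sub>\<ge>\<^sub>0 \<and> Arg2pi (Lam (x - z0)) \<noteq> A"
proof -
  assume x: "x \<notin> Nset"
  let ?z = "Lam (x - z0)"
  have im: "Im ?z \<noteq> 0" and im2: "Im (cnj (cis A) * ?z) \<noteq> 0" using x by (auto simp: Nset_def)
  have "?z \<notin> \<real>\<^sub>\<ge>\<^sub>0" using im by (auto simp: complex_nonneg_Reals_iff)
  moreover have "Arg2pi ?z \<noteq> A"
  proof
    assume a: "Arg2pi ?z = A"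
    have "?z = of_real (cmod ?z) * exp (\<i> * of_real (Arg2pi ?z))"
      using Arg2pi[of ?z] by (simp add: is_Arg_def)
    then have "?z = of_real (cmod ?z) * cis A" using a by (simp add: cis_conv_exp)
    then have "cnj (cis A) * ?z = of_real (cmod ?z)"
      by (metis (no_types, lifting) cis_cnj cis_mult complex_cnj_cancel_iff mult.left_commute mult.right_neutral
          add.right_inverse cis_zero)
    then show False using im2 by simp
  qed
  ultimately show ?thesis by blast
qed

lemma HF_linear: "linear (HF x)"
proof -
  have "linear (\<lambda>v. LamT (HU (Lam (x - z0)) (Lam v)))"
    using linear_compose[OF linear_compose[OF Lam_linear HU_linear] LamT_linear] by (simp add: o_def)
  then show ?thesis unfolding HF_def[abs_def] by (intro linear_compose_scale_right) 
qed

lemma Hm_mult: "x \<notin> Nset \<Longrightarrow> Hm x *v v = HF x v"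
  using matrix_works[OF HF_linear[unfolded linear_matrix_vector_mul_eq[symmetric]]] by (simp add: Hm_def)

lemma Gu_deriv: "x \<notin> Nset \<Longrightarrow> (Gu has_derivative (\<lambda>v. Hm x *v v)) (at x)"
proof -
  assume x: "x \<notin> Nset"
  have d: "(GU has_derivative HU (Lam (x - z0))) (at (Lam (x - z0)))"
    using notN[OF x] GU_deriv by blast
  have "((\<lambda>x. GU (Lam (x - z0))) has_derivative (\<lambda>v. HU (Lam (x - z0)) (Lam v))) (at x)"
    using has_derivative_compose[OF aff_deriv d] .
  then have "((\<lambda>x. LamT (GU (Lam (x - z0)))) has_derivative (\<lambda>v. LamT (HU (Lam (x - z0)) (Lam v)))) (at x)"
    by (rule bounded_linear.has_derivative[OF LamT_bl])
  then have "(Gu has_derivative HF x) (at x)"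
    unfolding Gu_def[abs_def] HF_def[abs_def] by (rule has_derivative_scaleR_right)
  then show ?thesis using Hm_mult[OF x] by simp
qed

lemma hyper:
  fixes n :: "real^2"
  assumes n: "n \<noteq> 0"
  shows "{x. n \<bullet> x = c} \<in> null_sets lebesgue" "closed {x. n \<bullet> x = c}"
    "x \<notin> {x. n \<bullet> x = c} \<Longrightarrow> finite {t. x + t *\<^sub>R d \<in> {x. n \<bullet> x = c}}"
proof -
  show "{x. n \<bullet> x = c} \<in> null_sets lebesgue"
    using negligible_hyperplane[of n c] n negligible_iff_null_sets by blast
  show "closed {x. n \<bullet> x = c}" by (rule closed_hyperplane)
  assume x: "x \<notin> {x. n \<bullet> x = c}"
  show "finite {t. x + t *\<^sub>R d \<in> {x. n \<bullet> x = c}}"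
  proof (cases "n \<bullet> d = 0")
    case True
    then have "{t. x + t *\<^sub>R d \<in> {x. n \<bullet> x = c}} = {}" using x by (auto simp: inner_add_right)
    then show ?thesis by simp
  next
    case False
    then have "{t. x + t *\<^sub>R d \<in> {x. n \<bullet> x = c}} \<subseteq> {(c - n \<bullet> x) / (n \<bullet> d)}"
      by (auto simp: inner_add_right field_simps)
    then show ?thesis using finite_subset by blast
  qed
qed

definition "n1 = s *\<^sub>R perp2 e"
definition "n2 = (cos A * s) *\<^sub>R perp2 e - sin A *\<^sub>R e"

lemma perp_e: "perp2 e \<bullet> e = 0" by (simp add: inner2 algebra_simps)
lemma perp_ne: "perp2 e \<noteq> 0" using e0 by (auto simp: vec_eq_iff forall_2)

lemma sinA: "sin A > 0" using A_pos A_lt_pi by (simp add: sin_gt_zero)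

lemma n_ne: "n1 \<noteq> 0" "n2 \<noteq> 0"
proof -
  show "n1 \<noteq> 0" using perp_ne ss by (auto simp: n1_def)
  have "n2 \<bullet> e = - sin A * (e \<bullet> e)" by (simp add: n2_def inner_diff_left perp_e)
  moreover have "e \<bullet> e > 0" using e0 by simp
  ultimately have "n2 \<bullet> e \<noteq> 0" using sinA by simp
  then show "n2 \<noteq> 0" by auto
qed

lemma Im_Lam: "Im (Lam (x - z0)) = n1 \<bullet> x - n1 \<bullet> z0"
  by (simp add: Lam_def n1_def inner_diff_left inner_diff_right inner_commute algebra_simps)

lemma Im_cLam: "Im (cnj (cis A) * Lam (x - z0)) = n2 \<bullet> x - n2 \<bullet> z0"
  by (simp add: Lam_def n2_def inner_diff_left inner_diff_right inner_commute algebra_simps)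

lemma Nset_eq: "Nset = {x. n1 \<bullet> x = n1 \<bullet> z0} \<union> {x. n2 \<bullet> x = n2 \<bullet> z0}"
  unfolding Nset_def Im_Lam Im_cLam by auto

lemma N_null: "Nset \<in> null_sets lebesgue"
  unfolding Nset_eq using hyper(1)[OF n_ne(1)] hyper(1)[OF n_ne(2)] by auto

lemma N_closed: "closed Nset"
  unfolding Nset_eq using hyper(2)[OF n_ne(1)] hyper(2)[OF n_ne(2)] by auto

lemma N_line: "x \<notin> Nset \<Longrightarrow> finite {t. x + t *\<^sub>R d \<in> Nset}"
proof -
  assume x: "x \<notin> Nset"
  have "{t. x + t *\<^sub>R d \<in> Nset} = {t. x + t *\<^sub>R d \<in> {x. n1 \<bullet> x = n1 \<bullet> z0}} \<union> {t. x + t *\<^sub>R d \<in> {x. n2 \<bullet> x = n2 \<bullet> z0}}"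
    unfolding Nset_eq by auto
  then show ?thesis using x hyper(3)[OF n_ne(1)] hyper(3)[OF n_ne(2)] unfolding Nset_eq by auto
qed

lemma HF_cont: "x \<notin> Nset \<Longrightarrow> isCont (\<lambda>x. HF x v) x"
proof -
  assume x: "x \<notin> Nset"
  have "isCont (\<lambda>z. HU z (Lam v)) (Lam (x - z0))" using notN[OF x] HU_cont by blast
  then have "isCont (\<lambda>x. HU (Lam (x - z0)) (Lam v)) x" using isCont_o2[OF aff_cont] by blast
  then have "isCont (\<lambda>x. LamT (HU (Lam (x - z0)) (Lam v))) x"
    using isCont_o2 linear_continuous_at[OF LamT_bl] by blast
  then show ?thesis unfolding HF_def by (intro continuous_intros)
qed

lemma Hm_entry: "Hm x $ i $ j = (if x \<in> Nset then 0 else HF x (axis j 1) $ i)"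
  by (simp add: Hm_def matrix_def)

lemma Hm_meas: "(\<lambda>x. Hm x $ i $ j) \<in> borel_measurable borel"
proof -
  have "(\<lambda>x. if x \<in> Nset then 0 else HF x (axis j 1) $ i) \<in> borel_measurable borel"
  proof (rule borel_measurable_continuous_on_if)
    show "Nset \<in> sets borel" using N_closed by (simp add: borel_closed)
    show "continuous_on Nset (\<lambda>x. 0::real)" by simp
    have "isCont (\<lambda>x. HF x (axis j 1) $ i) x" if "x \<in> - Nset" for x
      using HF_cont[of x "axis j 1"] that by (auto intro: continuous_intros)
    then show "continuous_on (- Nset) (\<lambda>x. HF x (axis j 1) $ i)"
      by (simp add: continuous_at_imp_continuous_on)
  qed
  then show ?thesis unfolding Hm_entry .
qed

definition "Cb = 1 + 3 * al + 2 * al\<^sup>2"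

lemma HF_norm: "norm (HF x v) \<le> Cb * norm v"
proof -
  have "norm (HF x v) = (1 / k^2) * (k * cmod (HU (Lam (x - z0)) (Lam v)))"
    by (simp add: HF_def LamT_norm)
  also have "\<dots> \<le> (1 / k^2) * (k * (Cb * cmod (Lam v)))"
    using HU_bound k_pos unfolding Cb_def by (intro mult_left_mono) auto
  also have "\<dots> = Cb * norm v" using k_pos by (simp add: Lam_norm power2_eq_square)
  finally show ?thesis .
qed

lemma Hm_bound: "\<bar>Hm x $ i $ j\<bar> \<le> Cb"
proof -
  have Cb0: "Cb \<ge> 0" using al_pos by (simp add: Cb_def)
  show ?thesis
  proof (cases "x \<in> Nset")
    case True then show ?thesis using Cb0 by (simp add: Hm_entry)
  next
    case False
    have "\<bar>HF x (axis j 1) $ i\<bar> \<le> norm (HF x (axis j 1))" by (rule component_le_norm_cart)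
    also have "\<dots> \<le> Cb" using HF_norm[of x "axis j 1"] by simp
    finally show ?thesis using False by (simp add: Hm_entry)
  qed
qed

lemma form_eq: "x \<notin> Nset \<Longrightarrow> v \<bullet> (Hm x *v v) = (1 / k^2) * (Lam v \<bullet> HU (Lam (x - z0)) (Lam v))"
  by (simp add: Hm_mult HF_def Lam_adj)

lemma form_bound: "al \<le> 1 \<Longrightarrow> x \<notin> Nset \<Longrightarrow> \<bar>v \<bullet> (Hm x *v v)\<bar> \<le> (norm v)^2"
proof -
  assume al1: "al \<le> 1" and x: "x \<notin> Nset"
  have z: "Lam (x - z0) \<noteq> 0" using notN[OF x] by auto
  have "\<bar>v \<bullet> (Hm x *v v)\<bar> = (1 / k^2) * \<bar>Lam v \<bullet> HU (Lam (x - z0)) (Lam v)\<bar>"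
    using k_pos by (simp add: form_eq[OF x] abs_mult)
  also have "\<dots> \<le> (1 / k^2) * (cmod (Lam v))^2"
    using HU_form_bound[OF al1 z] k_pos by (intro mult_left_mono) auto
  also have "\<dots> = (norm v)^2" using k_pos by (simp add: Lam_norm2)
  finally show ?thesis .
qed

lemma Lam_scale: "Lam (c *\<^sub>R y) = of_real c * Lam y"
  by (simp add: Lam_def complex_eq_iff)

lemma Lam_scaleT: "Lam ((1 / k^2) *\<^sub>R LamT w) = w"
  using k_pos by (simp add: Lam_scale Lam_LamT)

lemma aff_pt: "Lam ((z0 + (1 / k^2) *\<^sub>R LamT w) - z0) = w"
  by (simp add: Lam_scaleT)

lemma isCont_form:
  assumes x0: "x0 \<notin> Nset"
  shows "isCont (\<lambda>x. v \<bullet> (Hm x *v v)) x0"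
proof -
  have ev: "\<forall>\<^sub>F x in nhds x0. (1 / k^2) * (Lam v \<bullet> HU (Lam (x - z0)) (Lam v)) = v \<bullet> (Hm x *v v)"
  proof -
    have "\<forall>\<^sub>F x in nhds x0. x \<in> - Nset" using N_closed x0 by (intro eventually_nhds_in_open) auto
    then show ?thesis by eventually_elim (simp add: form_eq)
  qed
  have "isCont (\<lambda>z. HU z (Lam v)) (Lam (x0 - z0))" using notN[OF x0] HU_cont by blast
  then have "isCont (\<lambda>x. HU (Lam (x - z0)) (Lam v)) x0" using isCont_o2[OF aff_cont] by blast
  then have "isCont (\<lambda>x. (1 / k^2) * (Lam v \<bullet> HU (Lam (x - z0)) (Lam v))) x0"
    by (intro continuous_intros)
  then show ?thesis using isCont_cong[OF ev] by blast
qed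

lemma no_bound:
  assumes al1: "al > 1"
  shows "\<not> (\<exists>H. weak_hessian uu H \<and> (AE x in lebesgue. \<forall>v. \<bar>v \<bullet> (H x *v v)\<bar> \<le> norm v ^ 2))"
proof -
  define zs where "zs = cis (A / 2)"
  define ws where "ws = (1 - \<i>) * zs"
  define x0 where "x0 = z0 + (1 / k^2) *\<^sub>R LamT zs"
  define v0 where "v0 = (1 / k^2) *\<^sub>R LamT ws"
  have lx0: "Lam (x0 - z0) = zs" unfolding x0_def by (rule aff_pt)
  have lv0: "Lam v0 = ws" unfolding v0_def by (rule Lam_scaleT)
  have A2: "0 < A / 2" "A / 2 < pi" using A_pos A_lt_pi by auto
  have x0N: "x0 \<notin> Nset"
  proof -
    have "Im zs \<noteq> 0" unfolding zs_def using A2 sin_gt_zero by fastforce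
    moreover have "cnj (cis A) * zs = cis (- (A / 2))" unfolding zs_def by (simp add: cis_cnj cis_mult)
    then have "Im (cnj (cis A) * zs) \<noteq> 0" using A2 sin_gt_zero by fastforce
    ultimately show ?thesis unfolding Nset_def using lx0 by auto
  qed
  have vi: "ws \<bullet> HU zs ws > (cmod ws)^2" using viol(3)[OF al1] unfolding zs_def ws_def by simp
  have viol': "v0 \<bullet> (Hm x0 *v v0) > (norm v0)^2"
  proof -
    have "v0 \<bullet> (Hm x0 *v v0) = (1 / k^2) * (ws \<bullet> HU zs ws)" using form_eq[OF x0N] lx0 lv0 by simp
    moreover have "(norm v0)^2 = (1 / k^2) * (cmod ws)^2" using Lam_norm2[of v0] lv0 k_pos by (simp add: field_simps)
    moreover have "(1 / k^2) * (cmod ws)^2 < (1 / k^2) * (ws \<bullet> HU zs ws)"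
      using vi k_pos by (intro mult_strict_left_mono) auto
    ultimately show ?thesis by simp
  qed
  show ?thesis
    by (rule abstract_no_bound[OF uu_deriv Gu_cont Gu_deriv Hm_meas Hm_bound N_null N_line isCont_form[OF x0N] viol'])
qed

lemma has_bound:
  assumes al1: "al \<le> 1"
  shows "\<exists>H. weak_hessian uu H \<and> (AE x in lebesgue. \<forall>v. \<bar>v \<bullet> (H x *v v)\<bar> \<le> norm v ^ 2)"
proof (intro exI conjI)
  show "weak_hessian uu Hm"
    by (rule abstract_weak(5)[OF uu_deriv Gu_cont Gu_deriv Hm_meas Hm_bound N_null N_line])
  show "AE x in lebesgue. \<forall>v. \<bar>v \<bullet> (Hm x *v v)\<bar> \<le> norm v ^ 2"
    using AE_not_in[OF N_null] by eventually_elim (use form_bound[OF al1] in auto)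
qed

lemma W2: "W2inf_loc uu"
  by (rule abstract_weak(4)[OF uu_deriv Gu_cont Gu_deriv Hm_meas Hm_bound N_null N_line])

lemma not_C2: "\<not> Ck 2 uu"
proof
  assume C: "Ck 2 uu"
  have pdu: "pd i uu = (\<lambda>x. Gu x $ i)" for i
    by (rule abstract_weak(1)[OF uu_deriv Gu_cont Gu_deriv Hm_meas Hm_bound N_null N_line])
  have "Ck (Suc (Suc 0)) uu" using C by (simp add: numeral_2_eq_2)
  then have cont: "continuous_on UNIV (pd j (\<lambda>x. Gu x $ i))" for i j by (simp add: pdu)
  have pdH: "pd j (\<lambda>x. Gu x $ i) x = Hm x $ i $ j" if x: "x \<notin> Nset" for i j x
  proof -
    have "((\<lambda>x. Gu x $ i) has_derivative (\<lambda>v. (Hm x *v v) $ i)) (at x)"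
      using Gu_deriv[OF x] by (rule bounded_linear.has_derivative[OF bounded_linear_vec_nth])
    then have "frechet_derivative (\<lambda>x. Gu x $ i) (at x) = (\<lambda>v. (Hm x *v v) $ i)"
      using frechet_derivative_at by metis
    then show ?thesis by (simp add: pd_def matrix_vector_mul_component inner_axis)
  qed
  define v0 where "v0 = (1 / k^2) *\<^sub>R LamT \<i>"
  have lv0: "Lam v0 = \<i>" unfolding v0_def by (rule Lam_scaleT)
  define Q where "Q x = (\<Sum>i\<in>UNIV. \<Sum>j\<in>UNIV. v0$i * v0$j * pd j (\<lambda>x. Gu x $ i) x)" for x
  have Qc: "continuous_on UNIV Q" unfolding Q_def[abs_def]
    by (intro continuous_on_sum continuous_on_mult continuous_on_const cont)
  have QN: "Q x = (1 / k^2) * (\<i> \<bullet> HU (Lam (x - z0)) \<i>)" if x: "x \<notin> Nset" for x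
  proof -
    have "Q x = v0 \<bullet> (Hm x *v v0)" unfolding Q_def quad_expand using pdH[OF x] by simp
    then show ?thesis using form_eq[OF x] lv0 by simp
  qed
  define xt where "xt t = z0 + (1 / k^2) *\<^sub>R LamT (Complex 1 t)" for t
  have lxt: "Lam (xt t - z0) = Complex 1 t" for t unfolding xt_def by (rule aff_pt)
  have xtc: "isCont xt t" for t
  proof -
    have "isCont (\<lambda>t. Complex 1 t) t" unfolding isCont_def by (intro tendsto_Complex tendsto_intros)
    then have "isCont (\<lambda>t. LamT (Complex 1 t)) t" using isCont_o2 linear_continuous_at[OF LamT_bl] by blast
    then show ?thesis unfolding xt_def[abs_def] by (intro continuous_intros)
  qed
  have lim0: "((\<lambda>t. Q (xt t)) \<longlongrightarrow> Q (xt 0)) (at 0)"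
    using isCont_o2[OF xtc, of 0 Q] Qc by (simp add: continuous_on_eq_continuous_at isCont_def)
  have evA: "\<forall>\<^sub>F t in at 0. cos A * t - sin A \<noteq> 0"
  proof -
    have "((\<lambda>t. cos A * t - sin A) \<longlongrightarrow> cos A * 0 - sin A) (at (0::real))" by (intro tendsto_intros)
    moreover have "cos A * 0 - sin A < 0" using sinA by simp
    ultimately have "\<forall>\<^sub>F t in at (0::real). cos A * t - sin A < 0" by (rule order_tendstoD)
    then show ?thesis by eventually_elim auto
  qed
  have xtN: "xt t \<notin> Nset" if "t \<noteq> 0" "cos A * t - sin A \<noteq> 0" for t
    using that unfolding Nset_def by (simp add: lxt)
  have side: "(1 / k^2) * c = Q (xt 0)"
    if F: "F \<noteq> bot" "F \<le> at 0" "\<forall>\<^sub>F t in F. t \<noteq> 0"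
      and q: "((\<lambda>t. \<i> \<bullet> HU (Complex 1 t) \<i>) \<longlongrightarrow> c) F" for F c
  proof -
    have l1: "((\<lambda>t. Q (xt t)) \<longlongrightarrow> Q (xt 0)) F" using tendsto_mono[OF F(2) lim0] .
    have ev: "\<forall>\<^sub>F t in F. (1 / k^2) * (\<i> \<bullet> HU (Complex 1 t) \<i>) = Q (xt t)"
      using F(3) filter_leD[OF F(2) evA]
    proof eventually_elim
      case (elim t)
      then show ?case using QN[OF xtN[OF elim]] lxt by simp
    qed
    have "((\<lambda>t. (1 / k^2) * (\<i> \<bullet> HU (Complex 1 t) \<i>)) \<longlongrightarrow> (1 / k^2) * c) F"
      by (intro tendsto_intros q)
    then have "((\<lambda>t. Q (xt t)) \<longlongrightarrow> (1 / k^2) * c) F" using ev by (rule Lim_transform_eventually)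
    then show ?thesis using l1 F(1) tendsto_unique by blast
  qed
  have r: "(1 / k^2) * (1 - 2 * al\<^sup>2) = Q (xt 0)"
    by (rule side[OF _ _ _ q_right]) (auto simp: at_le eventually_at_right_field intro!: exI[of _ 1])
  have l: "(1 / k^2) * (1 - 2 * be\<^sup>2) = Q (xt 0)"
    by (rule side[OF _ _ _ q_left]) (auto simp: at_le eventually_at_left_field intro!: exI[of _ "-1"])
  have "(1 / k^2) * (1 - 2 * al\<^sup>2) = (1 / k^2) * (1 - 2 * be\<^sup>2)" using r l by simp
  then have "1 - 2 * al\<^sup>2 = 1 - 2 * be\<^sup>2" using k_pos by simp
  then have "al\<^sup>2 = be\<^sup>2" by simp
  then have "al = be" using al_pos be_pos by (simp add: power2_eq_iff)
  then show False using be_ne_al by simp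
qed

end


lemma collinear_line:
  assumes "\<And>p. p \<in> S \<Longrightarrow> \<exists>c. p = q + c *\<^sub>R w"
  shows "collinear S"
  unfolding collinear_def
proof (intro exI[of _ w] ballI)
  fix x y assume "x \<in> S" "y \<in> S"
  then obtain a b where "x = q + a *\<^sub>R w" "y = q + b *\<^sub>R w" using assms by blast
  then show "\<exists>c. x - y = c *\<^sub>R w" by (intro exI[of _ "a - b"]) (simp add: algebra_simps)
qed

lemma cs_range:
  fixes v w :: "'a::real_inner"
  assumes "v \<noteq> 0" "w \<noteq> 0"
  shows "-1 \<le> (v \<bullet> w) / (norm v * norm w)" "(v \<bullet> w) / (norm v * norm w) \<le> 1"
proof -
  have p: "norm v * norm w > 0" using assms by simp
  have "\<bar>v \<bullet> w\<bar> \<le> norm v * norm w" by (rule Cauchy_Schwarz_ineq2)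
  then show "-1 \<le> (v \<bullet> w) / (norm v * norm w)" "(v \<bullet> w) / (norm v * norm w) \<le> 1"
    using p by (auto simp: divide_le_eq le_divide_eq abs_le_iff)
qed

lemma angle_nonneg: "vec_angle v w \<ge> 0"
  using cs_range[of v w] by (auto simp: vec_angle_def intro!: arccos_lbound)

lemma angle_sign: "(v \<bullet> w \<le> 0) \<longleftrightarrow> vec_angle v w \<ge> pi / 2"
proof (cases "v = 0 \<or> w = 0")
  case True then show ?thesis by (auto simp: vec_angle_def)
next
  case False
  then have nz: "v \<noteq> 0" "w \<noteq> 0" by auto
  let ?t = "(v \<bullet> w) / (norm v * norm w)"
  have p: "norm v * norm w > 0" using nz by simp
  have r: "-1 \<le> ?t" "?t \<le> 1" using cs_range[OF nz] by auto
  have "?t \<le> 0 \<longleftrightarrow> arccos ?t \<ge> pi / 2"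
  proof
    assume "?t \<le> 0" then show "arccos ?t \<ge> pi / 2" using arccos_le_arccos[of ?t 0] r by simp
  next
    assume a: "arccos ?t \<ge> pi / 2"
    show "?t \<le> 0"
    proof (rule ccontr)
      assume "\<not> ?t \<le> 0"
      then have "arccos ?t < arccos 0" using arccos_less_arccos[of 0 ?t] r by simp
      then show False using a by simp
    qed
  qed
  moreover have "?t \<le> 0 \<longleftrightarrow> v \<bullet> w \<le> 0" using p by (simp add: divide_le_0_iff)
  ultimately show ?thesis using nz by (simp add: vec_angle_def)
qed

lemma angle_pi: "vec_angle v w = pi \<Longrightarrow> \<exists>l>0. v = (- l) *\<^sub>R w"
proof -
  assume a: "vec_angle v w = pi"
  then have nz: "v \<noteq> 0" "w \<noteq> 0" by (auto simp: vec_angle_def split: if_splits)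
  let ?t = "(v \<bullet> w) / (norm v * norm w)"
  have r: "?t \<in> {-1..1}" using cs_range[OF nz] by auto
  have "arccos ?t = pi" using a nz by (simp add: vec_angle_def)
  then have "?t = -1" using arccos_eq_pi_iff[OF r] by simp
  then have "v \<bullet> w = - (norm v * norm w)" using nz by (simp add: divide_eq_eq)
  then have "(- v) \<bullet> w = norm (- v) * norm w" by simp
  then have "norm (- v) *\<^sub>R w = norm w *\<^sub>R (- v)" using norm_cauchy_schwarz_eq by blast
  then have h: "norm v *\<^sub>R w = - (norm w *\<^sub>R v)" by simp
  have "(1 / norm w) *\<^sub>R (norm v *\<^sub>R w) = (1 / norm w) *\<^sub>R (- (norm w *\<^sub>R v))" using h by simp
  then have "(norm v / norm w) *\<^sub>R w = - v" using nz by simp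
  then have "v = (- (norm v / norm w)) *\<^sub>R w" by (metis minus_minus scaleR_minus_left)
  moreover have "norm v / norm w > 0" using nz by simp
  ultimately show ?thesis by blast
qed


lemma geo_e:
  fixes x1 x2 y1 y2 z0 :: "real^2"
  assumes nc: "\<not> collinear {x1, x2, y1, y2}"
    and x2: "x2 = (- m) *\<^sub>R x1" and m: "m > 0"
    and y2: "y2 = (- n) *\<^sub>R y1" and n: "n > 0"
    and z: "z0 \<in> affine hull {x2, y2}"
  shows "x1 - z0 \<noteq> 0"
proof
  assume "x1 - z0 = 0"
  then have "x1 \<in> affine hull {x2, y2}" using z by simp
  then obtain c d where cd: "x1 = c *\<^sub>R x2 + d *\<^sub>R y2" "c + d = 1" unfolding affine_hull_2 by blast
  have eq: "(1 + c * m) *\<^sub>R x1 = (- (d * n)) *\<^sub>R y1"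
    using cd(1) unfolding x2 y2 by (simp add: algebra_simps eq_neg_iff_add_eq_0)
  show False
  proof (cases "d = 0")
    case True
    then have "c = 1" using cd by simp
    then have "(1 + m) *\<^sub>R x1 = 0" using eq True by simp
    then have x10: "x1 = 0" using m by simp
    have "collinear {x1, x2, y1, y2}"
      by (rule collinear_line[of _ 0 y1]) (auto simp: x10 x2 y2 intro: exI[of _ 0] exI[of _ 1] exI[of _ "- n"])
    then show False using nc by simp
  next
    case False
    have dn: "- (d * n) \<noteq> 0" using False n by simp
    have "y1 = (1 / (- (d * n))) *\<^sub>R ((- (d * n)) *\<^sub>R y1)" using dn by simp
    also have "\<dots> = (1 / (- (d * n))) *\<^sub>R ((1 + c * m) *\<^sub>R x1)" using eq by simp
    also have "\<dots> = ((1 + c * m) / (- (d * n))) *\<^sub>R x1" by simp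
    finally have y1e: "y1 = ((1 + c * m) / (- (d * n))) *\<^sub>R x1" .
    have "collinear {x1, x2, y1, y2}"
    proof (rule collinear_line[of _ 0 x1])
      fix p assume "p \<in> {x1, x2, y1, y2}"
      then show "\<exists>c. p = 0 + c *\<^sub>R x1"
      proof (elim insertE)
        assume "p = x1" then show ?thesis by (intro exI[of _ 1]) simp
      next
        assume "p = x2" then show ?thesis using x2 by (intro exI[of _ "- m"]) simp
      next
        assume "p = y1" then show ?thesis using y1e by (intro exI[of _ "(1 + c * m) / (- (d * n))"]) simp
      next
        assume "p = y2" then show ?thesis using y1e y2 by (intro exI[of _ "- n * ((1 + c * m) / (- (d * n)))"]) simp
      qed simp
    qed
    then show False using nc by simp
  qed
qed

lemma geo_pi:
  fixes x1 x2 y1 y2 z0 :: "real^2"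
  assumes nc: "\<not> collinear {x1, x2, y1, y2}"
    and z1: "z0 \<in> affine hull {x1, y1}" and z2: "z0 \<in> affine hull {x2, y2}"
  shows "vec_angle (x2 - y2) (y1 - x1) \<noteq> pi"
proof
  assume "vec_angle (x2 - y2) (y1 - x1) = pi"
  then obtain l where l: "x2 - y2 = (- l) *\<^sub>R (y1 - x1)" using angle_pi by blast
  obtain a b where ab: "z0 = a *\<^sub>R x1 + b *\<^sub>R y1" "a + b = 1" using z1 unfolding affine_hull_2 by blast
  obtain c d where cd: "z0 = c *\<^sub>R x2 + d *\<^sub>R y2" "c + d = 1" using z2 unfolding affine_hull_2 by blast
  have z0e: "z0 = x1 + b *\<^sub>R (y1 - x1)" using ab by (simp add: algebra_simps) (metis add_diff_cancel_right' scaleR_collapse)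
  have z0e2: "z0 = y2 + c *\<^sub>R (x2 - y2)" using cd by (simp add: algebra_simps) (metis add_diff_cancel_left' scaleR_collapse add.commute)
  have y2e: "y2 = x1 + (b + c * l) *\<^sub>R (y1 - x1)"
  proof -
    have "y2 = z0 - c *\<^sub>R (x2 - y2)" using z0e2 by simp
    also have "\<dots> = x1 + b *\<^sub>R (y1 - x1) + (c * l) *\<^sub>R (y1 - x1)" using z0e l by simp
    finally show ?thesis by (simp add: scaleR_add_left)
  qed
  have x2e: "x2 = x1 + (b + c * l - l) *\<^sub>R (y1 - x1)"
  proof -
    have "x2 = y2 + (x2 - y2)" by simp
    also have "\<dots> = x1 + (b + c * l) *\<^sub>R (y1 - x1) + (- l) *\<^sub>R (y1 - x1)" using y2e l by simp
    finally show ?thesis by (simp add: scaleR_add_left algebra_simps)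
  qed
  have "collinear {x1, x2, y1, y2}"
  proof (rule collinear_line[of _ x1 "y1 - x1"])
    fix p assume "p \<in> {x1, x2, y1, y2}"
    then show "\<exists>c. p = x1 + c *\<^sub>R (y1 - x1)"
    proof (elim insertE)
      assume "p = x1" then show ?thesis by (intro exI[of _ 0]) simp
    next
      assume "p = x2" then show ?thesis using x2e by blast
    next
      assume "p = y1" then show ?thesis by (intro exI[of _ 1]) simp
    next
      assume "p = y2" then show ?thesis using y2e by blast
    qed simp
  qed
  then show False using nc by simp
qed

lemma angle_le_pi: "vec_angle v w \<le> pi"
proof (cases "v = 0 \<or> w = 0")
  case True then show ?thesis by (auto simp: vec_angle_def)
next
  case False
  then show ?thesis using cs_range[of v w] by (auto simp: vec_angle_def intro!: arccos_ubound)
qed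

theorem lemma4p5:
  fixes x1 x2 y1 y2 z0 :: "real^2" and \<mu>1 \<mu>2 \<nu>1 \<nu>2 :: real
  assumes "\<not> collinear {x1, x2, y1, y2}"
    and "\<mu>1 > 0" "\<mu>2 > 0" "\<mu>1 + \<mu>2 = 1"
    and "\<nu>1 > 0" "\<nu>2 > 0" "\<nu>1 + \<nu>2 = 1"
    and "\<mu>1 *\<^sub>R x1 + \<mu>2 *\<^sub>R x2 = 0"
    and "\<nu>1 *\<^sub>R y1 + \<nu>2 *\<^sub>R y2 = 0"
    and "x1 \<bullet> y1 \<ge> 0"
    and "norm x1 * norm y2 \<le> norm x2 * norm y1"
    and "vec_angle (x2 - y2) (y1 - x1) \<noteq> 0"
    and "z0 \<in> affine hull {x1, y1}" "z0 \<in> affine hull {x2, y2}"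
  shows "W2inf_loc (u_fun x1 x2 y1 y2 z0)
    \<and> ((x2 - y2) \<bullet> (y1 - x1) \<noteq> 0 \<longrightarrow> \<not> Ck 2 (u_fun x1 x2 y1 y2 z0))
    \<and> ((\<exists>H. weak_hessian (u_fun x1 x2 y1 y2 z0) H \<and>
           (AE x in lebesgue. \<forall>v. \<bar>v \<bullet> (H x *v v)\<bar> \<le> norm v ^ 2))
       \<longleftrightarrow> (x2 - y2) \<bullet> (y1 - x1) \<le> 0)"
proof -
  define m where "m = \<mu>1 / \<mu>2"
  define n where "n = \<nu>1 / \<nu>2"
  have m: "m > 0" using assms(2,3) by (simp add: m_def)
  have n: "n > 0" using assms(5,6) by (simp add: n_def)
  have x2e: "x2 = (- m) *\<^sub>R x1"
  proof -
    have "x2 = (1 / \<mu>2) *\<^sub>R (\<mu>2 *\<^sub>R x2)" using assms(3) by simp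
    also have "\<mu>2 *\<^sub>R x2 = - (\<mu>1 *\<^sub>R x1)" using assms(8) by (simp add: eq_neg_iff_add_eq_0 add.commute)
    finally show ?thesis by (simp add: m_def)
  qed
  have y2e: "y2 = (- n) *\<^sub>R y1"
  proof -
    have "y2 = (1 / \<nu>2) *\<^sub>R (\<nu>2 *\<^sub>R y2)" using assms(6) by simp
    also have "\<nu>2 *\<^sub>R y2 = - (\<nu>1 *\<^sub>R y1)" using assms(9) by (simp add: eq_neg_iff_add_eq_0 add.commute)
    finally show ?thesis by (simp add: n_def)
  qed
  have e0: "x1 - z0 \<noteq> 0" by (rule geo_e[OF assms(1) x2e m y2e n assms(14)])
  define A0 where "A0 = vec_angle (x2 - y2) (y1 - x1)"
  have A0pi: "A0 < pi" using geo_pi[OF assms(1) assms(13) assms(14)] angle_le_pi unfolding A0_def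
    by (metis order_le_less)
  have A0pos: "A0 > 0" using angle_nonneg assms(12) unfolding A0_def by (metis order_le_less)
  define al where "al = pi / (2 * A0)"
  have al_gt: "al > 1/2" using A0pi A0pos by (simp add: al_def field_simps)
  interpret P: Prof al by unfold_locales (rule al_gt)
  have alpha: "alpha_of x1 x2 y1 y2 = al" by (simp add: alpha_of_def al_def A0_def)
  have beta: "beta_of al = P.be" by (simp add: beta_of_def P.be_def)
  define s where "s = (if (x2 - z0) \<bullet> perp2 (x1 - z0) \<ge> 0 then 1 else -1 :: real)"
  interpret T: Tr al z0 "x1 - z0" s by unfold_locales (use e0 in \<open>auto simp: s_def\<close>)
  have ueq: "u_fun x1 x2 y1 y2 z0 = T.uu"
  proof
    fix x
    have th: "polar_theta z0 x1 x2 x = Arg2pi (T.Lam (x - z0))"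
      unfolding T.Lam_def polar_theta_def Let_def by (simp add: s_def)
    have r: "0 \<le> Arg2pi (T.Lam (x - z0))" "Arg2pi (T.Lam (x - z0)) < 2 * pi" using Arg2pi by auto
    have "u_fun x1 x2 y1 y2 z0 x = 1/2 * P.f2 (Arg2pi (T.Lam (x - z0))) * (norm (x - z0))^2"
      unfolding u_fun_def alpha beta Let_def th polar_rho_def using P.prof_h_eq[OF r] by simp
    also have "\<dots> = T.uu x"
      using T.k_pos by (simp add: T.uu_def P.U_def T.Lam_norm2)
    finally show "u_fun x1 x2 y1 y2 z0 x = T.uu x" .
  qed
  have sign: "(x2 - y2) \<bullet> (y1 - x1) \<le> 0 \<longleftrightarrow> al \<le> 1"
  proof -
    have "(x2 - y2) \<bullet> (y1 - x1) \<le> 0 \<longleftrightarrow> A0 \<ge> pi / 2" unfolding A0_def by (rule angle_sign)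
    also have "\<dots> \<longleftrightarrow> al \<le> 1" using A0pos by (simp add: al_def field_simps)
    finally show ?thesis .
  qed
  show ?thesis
  proof (intro conjI)
    show "W2inf_loc (u_fun x1 x2 y1 y2 z0)" unfolding ueq by (rule T.W2)
    show "(x2 - y2) \<bullet> (y1 - x1) \<noteq> 0 \<longrightarrow> \<not> Ck 2 (u_fun x1 x2 y1 y2 z0)" unfolding ueq using T.not_C2 by blast
    show "(\<exists>H. weak_hessian (u_fun x1 x2 y1 y2 z0) H \<and>
           (AE x in lebesgue. \<forall>v. \<bar>v \<bullet> (H x *v v)\<bar> \<le> norm v ^ 2))
       \<longleftrightarrow> (x2 - y2) \<bullet> (y1 - x1) \<le> 0"
      unfolding ueq sign using T.has_bound T.no_bound by (meson not_le)
  qed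
qed


end
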